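(* For every cache size $k\ge1$, the algorithm Mark&Predict (described in the context) is a randomized $(2,H_k,1)$-competitive algorithm for the phase-predictions setup, where $H_k=\sum_{j=1}^k 1/j$. That is, there is a constant $b$ (possibly depending on $k$) such that for every request sequence $I$ and every prediction vector $p$, $\mathbb{E}[\mathrm{ALG}(I,p)]\le 2\,\mathrm{OPT}(I)+H_k\,\eta_0(p,p^* )+\eta_1(p,p^* )+b$.
   Context: Paging: there is a universe $U$ of pages and a cache holding at most $k$ pages, initially empty. Requests $r_1,\dots,r_n\in U$ arrive online. If the requested page is not in the cache (a page fault), it must be loaded into the cache, evicting some cached page if the cache already holds $k$ pages. The cost of an algorithm is its number of page faults; $\mathrm{OPT}(I)$ is the minimum cost of an offline algorithm on request sequence $I$. Along with each request $r_i$ the online algorithm receives a prediction bit $p_i\in\{0,1\}$ (which may be arbitrary). A page whose most recent prediction is $0$ (resp. $1$) is called a $0$-page (resp. $1$-page). An algorithm is $(\alpha,\beta,\gamma)$-competitive if there is a constant $b$ (possibly depending on $k$) such that for every instance $I$ and all predictions $p$, $\mathrm{ALG}(I,p)\le \alpha\,\mathrm{OPT}(I)+\beta\,\eta_0+\gamma\,\eta_1+b$ (for randomized algorithms, $\mathrm{ALG}(I,p)$ is the expected cost). Phase-predictions setup: partition the request sequence into $k$-phases: the first starts at $r_1$, each phase is a maximal contiguous segment containing at most $k$ distinct pages, and each subsequent phase starts right after the previous one ends. For a request $r_i$ in phase $j$, the ground truth is $p_i^*=0$ if page $r_i$ is requested in phase $j+1$ and $p_i^*=1$ otherwise. The errors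 are $\eta_h$ ($h\in\{0,1\}$) = number of counted requests $i$ with $p_i=h$ and $p_i^*=1-h$, where the counted requests are, for each phase $j$ other than the last phase and each page requested in phase $j$, only the last request to that page within phase $j$ (predictions in the last phase are not counted). Algorithm Mark&Predict: pages carry a mark. On request $r_i$: if $r_i$ is not in the cache and the cache is full, then (i) if all cached pages are marked, unmark all pages (start of a new phase); (ii) if there is an unmarked $1$-page in the cache, evict one chosen uniformly at random among unmarked $1$-pages, otherwise evict an unmarked $0$-page chosen uniformly at random; then load $r_i$. Finally (in all cases) mark $r_i$. *)

theory Defs
  imports "HOL-Probability.Probability_Mass_Function"
begin

text \<open>Prediction bits are booleans: True = 1, False = 0.
  Requests are a list I of pages (type 'a is the universe U); predictions a bool list p
  with length p = length I.\<close>

text \<open>A valid (offline) schedule: Cs ! i is the cache content before request i,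
  Cs ! 0 = {} and each step follows the paging rules (hit: unchanged; fault with
  non-full cache: load; fault with full cache: evict some cached page, then load).\<close>

definition paging_step :: "nat \<Rightarrow> 'a set \<Rightarrow> 'a \<Rightarrow> 'a set \<Rightarrow> bool" where
  "paging_step k C r C' =
     (if r \<in> C then C' = C
      else if card C < k then C' = insert r C
      else (\<exists>q\<in>C. C' = insert r (C - {q})))"

definition valid_schedule :: "nat \<Rightarrow> 'a list \<Rightarrow> 'a set list \<Rightarrow> bool" where
  "valid_schedule k I Cs =
     (length Cs = length I + 1 \<and> Cs ! 0 = {} \<and>
      (\<forall>i < length I. paging_step k (Cs ! i) (I ! i) (Cs ! Suc i)))"

definition schedule_cost :: "'a list \<Rightarrow> 'a set list \<Rightarrow> nat" where
  "schedule_cost I Cs = card {i. i < length I \<and> I ! i \<notin> Cs ! i}"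

definition OPT :: "nat \<Rightarrow> 'a list \<Rightarrow> nat" where
  "OPT k I = (LEAST c. \<exists>Cs. valid_schedule k I Cs \<and> schedule_cost I Cs = c)"

text \<open>State: (cache, marked pages, most recent prediction of each page).\<close>

type_synonym 'a mp_state = "'a set \<times> 'a set \<times> ('a \<Rightarrow> bool)"

definition mp_step :: "nat \<Rightarrow> 'a mp_state \<Rightarrow> 'a \<times> bool \<Rightarrow> ('a mp_state \<times> nat) pmf" where
  "mp_step k s x = (case s of (C, M, P) \<Rightarrow> case x of (r, b) \<Rightarrow>
     (let P' = P(r := b) in
      if r \<in> C then return_pmf ((C, insert r M, P'), 0)
      else if card C < k then return_pmf ((insert r C, insert r M, P'), 1)
      else
        (let M0 = (if C \<subseteq> M then {} else M);
             U = C - M0;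
             U1 = {q \<in> U. P' q};
             cand = (if U1 \<noteq> {} then U1 else U)
         in map_pmf (\<lambda>q. ((insert r (C - {q}), insert r M0, P'), 1)) (pmf_of_set cand))))"

fun mp_run :: "nat \<Rightarrow> 'a mp_state \<Rightarrow> ('a \<times> bool) list \<Rightarrow> nat pmf" where
  "mp_run k s [] = return_pmf 0"
| "mp_run k s (x # xs) =
     bind_pmf (mp_step k s x) (\<lambda>(s', c). map_pmf (\<lambda>n. c + n) (mp_run k s' xs))"

definition mp_cost :: "nat \<Rightarrow> 'a list \<Rightarrow> bool list \<Rightarrow> real" where
  "mp_cost k I p = measure_pmf.expectation (mp_run k ({}, {}, (\<lambda>_. False)) (zip I p)) real"

text \<open>phase_aux computes the phase index of every position: greedy maximal
  segments with at most k distinct pages.\<close>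

fun phase_aux :: "nat \<Rightarrow> 'a set \<Rightarrow> nat \<Rightarrow> 'a list \<Rightarrow> nat list" where
  "phase_aux k D j [] = []"
| "phase_aux k D j (r # rs) =
     (if r \<in> D \<or> card D < k then j # phase_aux k (insert r D) j rs
      else Suc j # phase_aux k {r} (Suc j) rs)"

definition phase :: "nat \<Rightarrow> 'a list \<Rightarrow> nat \<Rightarrow> nat" where
  "phase k I i = phase_aux k {} 0 I ! i"

definition pstar :: "nat \<Rightarrow> 'a list \<Rightarrow> nat \<Rightarrow> bool" where
  "pstar k I i = (\<not> (\<exists>i'<length I. phase k I i' = Suc (phase k I i) \<and> I ! i' = I ! i))"

definition counted :: "nat \<Rightarrow> 'a list \<Rightarrow> nat \<Rightarrow> bool" where
  "counted k I i = (i < length I \<and> phase k I i < phase k I (length I - 1) \<and>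
     \<not> (\<exists>i'. i < i' \<and> i' < length I \<and> phase k I i' = phase k I i \<and> I ! i' = I ! i))"

definition eta :: "nat \<Rightarrow> 'a list \<Rightarrow> bool list \<Rightarrow> bool \<Rightarrow> nat" where
  "eta k I p h = card {i. counted k I i \<and> p ! i = h \<and> pstar k I i = (\<not> h)}"

end

theory Submission
  imports Defs
begin


lemma run_bounded: "set_pmf (mp_run k s xs) \<subseteq> {0..length xs}"
proof (induction xs arbitrary: s)
  case Nil thus ?case by simp
next
  case (Cons x xs)
  have st: "\<And>s' c. (s',c) \<in> set_pmf (mp_step k s x) \<Longrightarrow> c \<le> 1"
    unfolding mp_step_def by (auto simp: Let_def split: prod.splits if_splits)
  show ?case using Cons st by (fastforce split: prod.splits)
qed

definition E :: "nat \<Rightarrow> 'a mp_state \<Rightarrow> ('a \<times> bool) list \<Rightarrow> real" where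
  "E k s xs = measure_pmf.expectation (mp_run k s xs) real"

lemma E_nonneg: "E k s xs \<ge> 0" unfolding E_def by simp

lemma E_le: "E k s xs \<le> length xs"
  unfolding E_def
proof (rule measure_pmf.integral_le_const)
  show "AE x in measure_pmf (mp_run k s xs). real x \<le> real (length xs)"
    using run_bounded by (intro AE_pmfI) fastforce
  show "integrable (measure_pmf (mp_run k s xs)) real"
    using run_bounded by (intro measure_pmf.integrable_const_bound[where B="length xs"] AE_pmfI) fastforce+
qed

lemma nn_int_pmf:
  fixes f :: "'b \<Rightarrow> real"
  assumes "\<And>x. x \<in> set_pmf M \<Longrightarrow> 0 \<le> f x \<and> f x \<le> B"
  shows "(\<integral>\<^sup>+x. ennreal (f x) \<partial>measure_pmf M) = ennreal (measure_pmf.expectation M f)"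
proof (rule nn_integral_eq_integral)
  show "integrable (measure_pmf M) f"
    using assms by (intro measure_pmf.integrable_const_bound[where B=B] AE_pmfI) auto
  show "AE x in measure_pmf M. 0 \<le> f x" using assms by (intro AE_pmfI) auto
qed

lemma step_cost: "(s',c) \<in> set_pmf (mp_step k s x) \<Longrightarrow> c \<le> 1"
    unfolding mp_step_def by (auto simp: Let_def split: prod.splits if_splits)

lemma E_Cons: "E k s (x#xs) = measure_pmf.expectation (mp_step k s x) (\<lambda>(s',c). real c + E k s' xs)"
proof -
  have b1: "\<And>y. y \<in> set_pmf (mp_run k s (x#xs)) \<Longrightarrow> 0 \<le> real y \<and> real y \<le> length (x#xs)"
    using run_bounded[of k s "x#xs"] by fastforce
  have "ennreal (E k s (x#xs)) = (\<integral>\<^sup>+y. ennreal (real y) \<partial>measure_pmf (mp_run k s (x#xs)))"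
    unfolding E_def by (rule nn_int_pmf[OF b1, symmetric])
  also have "\<dots> = (\<integral>\<^sup>+z. (\<integral>\<^sup>+y. ennreal (real y) \<partial>measure_pmf (case z of (s', c) \<Rightarrow> map_pmf ((+) c) (mp_run k s' xs))) \<partial>measure_pmf (mp_step k s x))"
    by simp
  also have "\<dots> = (\<integral>\<^sup>+z. ennreal ((\<lambda>(s',c). real c + E k s' xs) z) \<partial>measure_pmf (mp_step k s x))"
  proof -
    have key: "(\<integral>\<^sup>+y. ennreal (real y) \<partial>measure_pmf (map_pmf ((+) d) (mp_run k a xs))) = ennreal (real d + E k a xs)" for a d
    proof -
    have "(\<integral>\<^sup>+y. ennreal (real y) \<partial>measure_pmf (map_pmf ((+) d) (mp_run k a xs)))
       = (\<integral>\<^sup>+y. ennreal (real d + real y) \<partial>measure_pmf (mp_run k a xs))" by simp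
    also have "\<dots> = ennreal (measure_pmf.expectation (mp_run k a xs) (\<lambda>y. real d + real y))"
      using run_bounded[of k "a" xs] by (intro nn_int_pmf[where B="real d + length xs"]) fastforce
    also have "\<dots> = ennreal (real d + E k a xs)"
      unfolding E_def
      using run_bounded[of k "a" xs]
      by (subst Bochner_Integration.integral_add) (auto intro!: measure_pmf.integrable_const_bound[where B="length xs"] AE_pmfI)
    finally show ?thesis .
    qed
    show ?thesis by (rule nn_integral_cong) (auto split: prod.splits simp: key[simplified])
  qed
  also have "\<dots> = ennreal (measure_pmf.expectation (mp_step k s x) (\<lambda>(s',c). real c + E k s' xs))"
  proof (rule nn_int_pmf[where B="1 + length xs"], clarsimp)
    fix a aa b ba assume "((a, aa, b), ba) \<in> set_pmf (mp_step k s x)"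
    then have "ba \<le> 1" by (rule step_cost)
    then show "0 \<le> real ba + E k (a, aa, b) xs \<and> real ba + E k (a, aa, b) xs \<le> 1 + real (length xs)"
      using E_nonneg[of k "(a,aa,b)" xs] E_le[of k "(a,aa,b)" xs] by linarith
  qed
  finally show ?thesis
    by (subst (asm) ennreal_inj) (auto simp: E_nonneg intro!: Bochner_Integration.integral_nonneg)
qed

lemma exp_return: "measure_pmf.expectation (return_pmf x) f = (f x :: real)"
  by simp

lemma E_step_hit: "r \<in> C \<Longrightarrow> E k (C,M,P) ((r,b)#xs) = E k (C, insert r M, P(r:=b)) xs"
  by (simp add: E_Cons mp_step_def)

lemma E_step_load: "r \<notin> C \<Longrightarrow> card C < k \<Longrightarrow> E k (C,M,P) ((r,b)#xs) = 1 + E k (insert r C, insert r M, P(r:=b)) xs"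
  by (simp add: E_Cons mp_step_def)

lemma E_step_evict:
  fixes C M :: "'a set" and P :: "'a \<Rightarrow> bool" and b :: bool and r :: 'a
  assumes "r \<notin> C" "finite C" "\<not> card C < k" "\<not> C \<subseteq> M"
  defines "U1 \<equiv> {q \<in> C - M. (P(r:=b)) q}"
  defines "cand \<equiv> (if U1 \<noteq> {} then U1 else C - M)"
  shows "E k (C,M,P) ((r,b)#xs) = 1 + (\<Sum>q\<in>cand. E k (insert r (C - {q}), insert r M, P(r:=b)) xs) / card cand"
proof -
  have ne: "cand \<noteq> {}" "finite cand" using assms(2,4) unfolding cand_def U1_def by auto
  have "mp_step k (C,M,P) (r,b) = map_pmf (\<lambda>q. ((insert r (C - {q}), insert r M, P(r:=b)), 1)) (pmf_of_set cand)"
    using assms unfolding mp_step_def cand_def U1_def by (simp add: Let_def) blast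
  then have "E k (C,M,P) ((r,b)#xs) = (\<Sum>q\<in>cand. 1 + E k (insert r (C - {q}), insert r M, P(r:=b)) xs) / card cand"
    using ne by (simp add: E_Cons integral_pmf_of_set)
  also have "\<dots> = 1 + (\<Sum>q\<in>cand. E k (insert r (C - {q}), insert r M, P(r:=b)) xs) / card cand"
    using ne by (simp add: sum.distrib add_divide_distrib)
  finally show ?thesis .
qed

lemma E_step_phase:
  fixes C M :: "'a set" and P :: "'a \<Rightarrow> bool" and b :: bool and r :: 'a
  assumes "r \<notin> C" "finite C" "C \<noteq> {}" "\<not> card C < k" "C \<subseteq> M"
  defines "U1 \<equiv> {q \<in> C. (P(r:=b)) q}"
  defines "cand \<equiv> (if U1 \<noteq> {} then U1 else C)"
  shows "E k (C,M,P) ((r,b)#xs) = 1 + (\<Sum>q\<in>cand. E k (insert r (C - {q}), {r}, P(r:=b)) xs) / card cand"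
proof -
  have ne: "cand \<noteq> {}" "finite cand" using assms(2,3) unfolding cand_def U1_def by auto
  have "mp_step k (C,M,P) (r,b) = map_pmf (\<lambda>q. ((insert r (C - {q}), {r}, P(r:=b)), 1)) (pmf_of_set cand)"
    using assms unfolding mp_step_def cand_def U1_def by (simp add: Let_def) blast
  then have "E k (C,M,P) ((r,b)#xs) = (\<Sum>q\<in>cand. 1 + E k (insert r (C - {q}), {r}, P(r:=b)) xs) / card cand"
    using ne by (simp add: E_Cons integral_pmf_of_set)
  also have "\<dots> = 1 + (\<Sum>q\<in>cand. E k (insert r (C - {q}), {r}, P(r:=b)) xs) / card cand"
    using ne by (simp add: sum.distrib add_divide_distrib)
  finally show ?thesis .
qed


definition fam :: "'a set \<Rightarrow> nat \<Rightarrow> 'a set set" where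
  "fam Z h = {S. S \<subseteq> Z \<and> card S = h}"

lemma fam_card: "finite Z \<Longrightarrow> card (fam Z h) = card Z choose h"
  unfolding fam_def by (rule n_subsets)

lemma fam_finite: "finite Z \<Longrightarrow> finite (fam Z h)"
  unfolding fam_def by (auto intro: finite_subset[of _ "Pow Z"])

lemma fam_ne: "finite Z \<Longrightarrow> h \<le> card Z \<Longrightarrow> fam Z h \<noteq> {}"
proof -
  assume "finite Z" "h \<le> card Z"
  then have "card (fam Z h) > 0" using fam_card[of Z h] by simp
  then show ?thesis by auto
qed

lemma sum_pairs_add:
  fixes f :: "'a set \<Rightarrow> real"
  assumes "finite Z"
  shows "(\<Sum>S\<in>fam Z h. \<Sum>x\<in>Z - S. f (insert x S)) = real (Suc h) * (\<Sum>S\<in>fam Z (Suc h). f S)"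
proof -
  have fin: "\<And>S. S \<in> fam Z h' \<Longrightarrow> finite S" for h' using assms unfolding fam_def by (auto intro: finite_subset)
  have "(\<Sum>S\<in>fam Z h. \<Sum>x\<in>Z - S. f (insert x S)) = (\<Sum>(S,x)\<in>Sigma (fam Z h) (\<lambda>S. Z - S). f (insert x S))"
    by (rule sum.Sigma) (use assms fam_finite in auto)
  also have "\<dots> = (\<Sum>(S,x)\<in>Sigma (fam Z (Suc h)) (\<lambda>S. S). f S)"
  proof (rule sum.reindex_bij_witness[where i="\<lambda>(S,x). (S - {x}, x)" and j="\<lambda>(S,x). (insert x S, x)"])
    fix a assume a: "a \<in> Sigma (fam Z h) (\<lambda>S. Z - S)"
    obtain S x where ax: "a = (S,x)" by (cases a)
    have fS: "finite S" using a ax fin by auto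
    have xS: "x \<notin> S" "x \<in> Z" "S \<subseteq> Z" "card S = h" using a ax unfolding fam_def by auto
    show "(case case a of (S, x) \<Rightarrow> (insert x S, x) of (S, x) \<Rightarrow> (S - {x}, x)) = a"
      using xS ax by auto
    show "(case a of (S, x) \<Rightarrow> (insert x S, x)) \<in> Sigma (fam Z (Suc h)) (\<lambda>S. S)"
      using xS ax fS unfolding fam_def by auto
    show "(case case a of (S, x) \<Rightarrow> (insert x S, x) of (S, x) \<Rightarrow> f S) = (case a of (S, x) \<Rightarrow> f (insert x S))"
      using ax by simp
  next
    fix a assume a: "a \<in> Sigma (fam Z (Suc h)) (\<lambda>S. S)"
    obtain S x where ax: "a = (S,x)" by (cases a)
    have fS: "finite S" using a ax fin by auto
    have xS: "x \<in> S" "S \<subseteq> Z" "card S = Suc h" using a ax unfolding fam_def by auto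
    show "(case case a of (S, x) \<Rightarrow> (S - {x}, x) of (S, x) \<Rightarrow> (insert x S, x)) = a"
      using xS ax by auto
    show "(case a of (S, x) \<Rightarrow> (S - {x}, x)) \<in> Sigma (fam Z h) (\<lambda>S. Z - S)"
      using xS ax fS unfolding fam_def by auto
  qed
  also have "\<dots> = (\<Sum>S\<in>fam Z (Suc h). \<Sum>x\<in>S. f S)"
    by (rule sum.Sigma[symmetric]) (use assms fam_finite fin in auto)
  also have "\<dots> = (\<Sum>S\<in>fam Z (Suc h). real (Suc h) * f S)"
    by (rule sum.cong) (auto simp: fam_def)
  finally show ?thesis by (simp add: sum_distrib_left)
qed


lemma sum_pairs_rem:
  fixes g :: "'a set \<Rightarrow> real"
  assumes "finite Z" "r \<in> Z"
  shows "(\<Sum>S\<in>{S\<in>fam Z h. r \<in> S}. \<Sum>x\<in>Z - S. g (insert x (S - {r}))) = real h * (\<Sum>S\<in>fam (Z - {r}) h. g S)"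
proof -
  have fin: "\<And>S. S \<in> fam Z' h' \<Longrightarrow> S \<subseteq> Z \<Longrightarrow> finite S" for h' Z' using assms by (auto intro: finite_subset)
  have "(\<Sum>S\<in>{S\<in>fam Z h. r \<in> S}. \<Sum>x\<in>Z - S. g (insert x (S - {r}))) = (\<Sum>(S,x)\<in>Sigma {S\<in>fam Z h. r \<in> S} (\<lambda>S. Z - S). g (insert x (S - {r})))"
  proof (rule sum.Sigma)
    show "finite {S \<in> fam Z h. r \<in> S}" using fam_finite[OF assms(1), of h] by simp
    show "\<forall>S\<in>{S \<in> fam Z h. r \<in> S}. finite (Z - S)" using assms by auto
  qed
  also have "\<dots> = (\<Sum>(S,x)\<in>Sigma (fam (Z - {r}) h) (\<lambda>S. S). g S)"
  proof (rule sum.reindex_bij_witness[where i="\<lambda>(S,x). (insert r (S - {x}), x)" and j="\<lambda>(S,x). (insert x (S - {r}), x)"])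
    fix a assume a: "a \<in> Sigma {S \<in> fam Z h. r \<in> S} (\<lambda>S. Z - S)"
    obtain S x where ax: "a = (S,x)" by (cases a)
    have rS: "r \<in> S" "x \<notin> S" "x \<in> Z" "S \<subseteq> Z" "card S = h" using a ax unfolding fam_def by auto
    have fS: "finite S" using rS(4) assms(1) by (rule finite_subset)
    show "(case case a of (S, x) \<Rightarrow> (insert x (S - {r}), x) of (S, x) \<Rightarrow> (insert r (S - {x}), x)) = a"
      using rS ax by auto
    show "(case a of (S, x) \<Rightarrow> (insert x (S - {r}), x)) \<in> Sigma (fam (Z - {r}) h) (\<lambda>S. S)"
    proof -
      have "x \<noteq> r" using rS by auto
      moreover have "card (insert x (S - {r})) = h"
      proof -
        have "h > 0" using rS fS card_gt_0_iff by blast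
        then show ?thesis using rS fS by (simp add: card_insert_if)
      qed
      ultimately show ?thesis using ax rS unfolding fam_def by auto
    qed
    show "(case case a of (S, x) \<Rightarrow> (insert x (S - {r}), x) of (S, x) \<Rightarrow> g S) = (case a of (S, x) \<Rightarrow> g (insert x (S - {r})))"
      using ax by simp
  next
    fix a assume a: "a \<in> Sigma (fam (Z - {r}) h) (\<lambda>S. S)"
    obtain S x where ax: "a = (S,x)" by (cases a)
    have rS: "r \<notin> S" "x \<in> S" "S \<subseteq> Z" "card S = h" using a ax unfolding fam_def by auto
    have fS: "finite S" using rS(3) assms(1) by (rule finite_subset)
    show "(case case a of (S, x) \<Rightarrow> (insert r (S - {x}), x) of (S, x) \<Rightarrow> (insert x (S - {r}), x)) = a"
      using rS ax by auto
    show "(case a of (S, x) \<Rightarrow> (insert r (S - {x}), x)) \<in> Sigma {S \<in> fam Z h. r \<in> S} (\<lambda>S. Z - S)"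
    proof -
      have "x \<noteq> r" using rS by auto
      moreover have "card (insert r (S - {x})) = h"
      proof -
        have "h > 0" using rS fS card_gt_0_iff by blast
        then show ?thesis using rS fS by (simp add: card_insert_if)
      qed
      ultimately show ?thesis using ax rS assms unfolding fam_def by auto
    qed
  qed
  also have "\<dots> = (\<Sum>S\<in>fam (Z - {r}) h. \<Sum>x\<in>S. g S)"
  proof (rule sum.Sigma[symmetric])
    show "finite (fam (Z - {r}) h)" using assms by (intro fam_finite) auto
    show "\<forall>S\<in>fam (Z - {r}) h. finite S" using assms unfolding fam_def by (auto intro: finite_subset)
  qed
  also have "\<dots> = (\<Sum>S\<in>fam (Z - {r}) h. real h * g S)"
    by (rule sum.cong) (auto simp: fam_def)
  finally show ?thesis by (simp add: sum_distrib_left)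
qed


lemma binom_rel: "(u - h) * (u choose h) = Suc h * (u choose Suc h)"
  using binomial_absorb_comp[of u h] binomial_absorption[of h u] by simp

lemma avg_add:
  fixes f :: "'a set \<Rightarrow> real"
  assumes "finite Z" "h < card Z"
  shows "(\<Sum>S\<in>fam Z h. (\<Sum>x\<in>Z - S. f (insert x S)) / real (card Z - h)) / real (card (fam Z h))
       = (\<Sum>S\<in>fam Z (Suc h). f S) / real (card (fam Z (Suc h)))"
proof -
  let ?u = "card Z"
  have "(\<Sum>S\<in>fam Z h. (\<Sum>x\<in>Z - S. f (insert x S)) / real (card Z - h)) = (\<Sum>S\<in>fam Z h. (\<Sum>x\<in>Z - S. f (insert x S))) / real (card Z - h)"
    by (simp add: sum_divide_distrib)
  also have "\<dots> = real (Suc h) * (\<Sum>S\<in>fam Z (Suc h). f S) / real (card Z - h)"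
    using sum_pairs_add[OF assms(1)] by simp
  finally have eq: "(\<Sum>S\<in>fam Z h. (\<Sum>x\<in>Z - S. f (insert x S)) / real (card Z - h)) = real (Suc h) * (\<Sum>S\<in>fam Z (Suc h). f S) / real (card Z - h)" .
  have rel: "real (?u - h) * real (?u choose h) = real (Suc h) * real (?u choose Suc h)"
    using binom_rel[of ?u h] by (metis of_nat_mult)
  have pos: "real (?u - h) > 0" "real (?u choose Suc h) > 0" using assms by auto
  have "real (Suc h) * (\<Sum>S\<in>fam Z (Suc h). f S) / real (card Z - h) / real (?u choose h)
      = real (Suc h) * (\<Sum>S\<in>fam Z (Suc h). f S) / (real (card Z - h) * real (?u choose h))" by simp
  also have "\<dots> = real (Suc h) * (\<Sum>S\<in>fam Z (Suc h). f S) / (real (Suc h) * real (?u choose Suc h))"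
    using rel by simp
  also have "\<dots> = (\<Sum>S\<in>fam Z (Suc h). f S) / real (?u choose Suc h)"
    by (simp del: of_nat_Suc)
  finally show ?thesis unfolding eq fam_card[OF assms(1)] .
qed

lemma avg_rem:
  fixes g :: "'a set \<Rightarrow> real"
  assumes "finite Z" "r \<in> Z" "h < card Z"
  shows "(\<Sum>S\<in>fam Z h. (if r \<in> S then 1 + (\<Sum>x\<in>Z - S. g (insert x (S - {r}))) / real (card Z - h) else g S)) / real (card (fam Z h))
       = real h / real (card Z) + (\<Sum>S\<in>fam (Z - {r}) h. g S) / real (card (fam (Z - {r}) h))"
proof -
  let ?u = "card Z"
  have fin: "finite (fam Z h)" using assms(1) by (rule fam_finite)
  have split: "fam Z h = {S\<in>fam Z h. r \<in> S} \<union> fam (Z - {r}) h" "{S\<in>fam Z h. r \<in> S} \<inter> fam (Z - {r}) h = {}"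
    unfolding fam_def by auto
  have cZ: "card (Z - {r}) = ?u - 1" using assms by simp
  have c1: "real (card {S\<in>fam Z h. r \<in> S}) = real (?u choose h) - real ((?u - 1) choose h)"
  proof -
    have "card (fam Z h) = card {S\<in>fam Z h. r \<in> S} + card (fam (Z - {r}) h)"
      using split fin by (metis card_Un_disjoint finite_Un)
    then show ?thesis using fam_card[OF assms(1)] fam_card[of "Z - {r}" h] assms cZ by simp
  qed
  have "(\<Sum>S\<in>fam Z h. (if r \<in> S then 1 + (\<Sum>x\<in>Z - S. g (insert x (S - {r}))) / real (?u - h) else g S))
      = (\<Sum>S\<in>{S\<in>fam Z h. r \<in> S}. 1 + (\<Sum>x\<in>Z - S. g (insert x (S - {r}))) / real (?u - h))
        + (\<Sum>S\<in>fam (Z - {r}) h. g S)"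
  proof -
    have "(\<Sum>S\<in>fam Z h. (if r \<in> S then 1 + (\<Sum>x\<in>Z - S. g (insert x (S - {r}))) / real (?u - h) else g S))
       = (\<Sum>S\<in>{S\<in>fam Z h. r \<in> S}. (if r \<in> S then 1 + (\<Sum>x\<in>Z - S. g (insert x (S - {r}))) / real (?u - h) else g S))
        + (\<Sum>S\<in>fam (Z - {r}) h. (if r \<in> S then 1 + (\<Sum>x\<in>Z - S. g (insert x (S - {r}))) / real (?u - h) else g S))"
      using split fin by (metis (no_types, lifting) finite_Un sum.union_disjoint)
    moreover have "(\<Sum>S\<in>fam (Z - {r}) h. (if r \<in> S then 1 + (\<Sum>x\<in>Z - S. g (insert x (S - {r}))) / real (?u - h) else g S)) = (\<Sum>S\<in>fam (Z - {r}) h. g S)"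
      by (rule sum.cong) (auto simp: fam_def)
    ultimately show ?thesis by simp
  qed
  also have "\<dots> = real (card {S\<in>fam Z h. r \<in> S}) + real h * (\<Sum>S\<in>fam (Z - {r}) h. g S) / real (?u - h) + (\<Sum>S\<in>fam (Z - {r}) h. g S)"
    using sum_pairs_rem[OF assms(1,2), where h=h and g=g] by (simp add: sum.distrib sum_divide_distrib[symmetric])
  finally have eq: "(\<Sum>S\<in>fam Z h. (if r \<in> S then 1 + (\<Sum>x\<in>Z - S. g (insert x (S - {r}))) / real (?u - h) else g S))
     = real (card {S\<in>fam Z h. r \<in> S}) + real h * (\<Sum>S\<in>fam (Z - {r}) h. g S) / real (?u - h) + (\<Sum>S\<in>fam (Z - {r}) h. g S)" .
  have rel: "real (?u - h) * real (?u choose h) = real ?u * real ((?u - 1) choose h)"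
    using binomial_absorb_comp[of ?u h] by (metis of_nat_mult)
  have pos: "real (?u - h) > 0" "real ((?u - 1) choose h) > 0" "real ?u > 0" using assms by auto
  have hu: "real (?u - h) = real ?u - real h" using assms by simp
  define c where "c = real (?u choose h)"
  define c' where "c' = real ((?u - 1) choose h)"
  define Sg where "Sg = (\<Sum>S\<in>fam (Z - {r}) h. g S)"
  have rel': "(real ?u - real h) * c = real ?u * c'" using rel hu unfolding c_def c'_def by simp
  have cpos: "c > 0" "c' > 0" "real ?u - real h > 0" using pos hu assms unfolding c_def c'_def by auto
  have A: "(c - c') / c = real h / real ?u"
  proof -
    have "c' = (real ?u - real h) * c / real ?u" using rel' pos by (simp add: field_simps)
    then show ?thesis using cpos pos by (simp add: field_simps)
  qed
  have B: "(real h * Sg / (real ?u - real h) + Sg) / c = Sg / c'"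
  proof -
    have "real h * Sg / (real ?u - real h) + Sg = real ?u * Sg / (real ?u - real h)"
      using cpos by (simp add: field_simps)
    also have "\<dots> / c = real ?u * Sg / ((real ?u - real h) * c)" by simp
    also have "\<dots> = Sg / c'" using rel' cpos pos by (simp add: field_simps)
    finally show ?thesis .
  qed
  have "(c - c' + real h * Sg / (real ?u - real h) + Sg) / c = (c - c') / c + (real h * Sg / (real ?u - real h) + Sg) / c"
    by (simp add: add_divide_distrib)
  then have "(c - c' + real h * Sg / (real ?u - real h) + Sg) / c = real h / real ?u + Sg / c'" using A B by simp
  moreover have fZr: "card (fam (Z - {r}) h) = (?u - 1) choose h" using fam_card[of "Z-{r}" h] assms(1) cZ by simp
  note eq' = eq[unfolded hu c1]
  ultimately show ?thesis unfolding fam_card[OF assms(1)] fZr hu eq'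
    unfolding c_def c'_def Sg_def by simp
qed



definition pf :: "nat \<Rightarrow> 'a set \<times> nat \<Rightarrow> 'a \<Rightarrow> 'a set \<times> nat" where
  "pf k Dj r = (case Dj of (D, j) \<Rightarrow> if r \<in> D \<or> card D < k then (insert r D, j) else ({r}, Suc j))"

lemma phase_aux_nth:
  "i < length rs \<Longrightarrow> phase_aux k D j rs ! i = snd (foldl (pf k) (D,j) (take (Suc i) rs))"
proof (induction rs arbitrary: D j i)
  case Nil then show ?case by simp
next
  case (Cons r rs)
  show ?case
  proof (cases i)
    case 0 then show ?thesis by (simp add: pf_def)
  next
    case (Suc i')
    then have "i' < length rs" using Cons by simp
    then show ?thesis using Cons.IH Suc by (simp add: pf_def)
  qed
qed

locale mpl =
  fixes k :: nat and I :: "'a list" and p :: "bool list"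
  assumes k1: "1 \<le> k" and len: "length p = length I"
begin

abbreviation "nI \<equiv> length I"
abbreviation "ph i \<equiv> phase k I i"

fun ds :: "nat \<Rightarrow> 'a set \<times> 'a set \<times> nat \<times> ('a \<Rightarrow> bool)" where
  "ds 0 = ({}, {}, 0, \<lambda>_. False)"
| "ds (Suc t) = (case ds t of (Ol, M, j, P) \<Rightarrow>
     if I!t \<in> M \<or> card M < k then (Ol, insert (I!t) M, j, P(I!t := p!t))
     else (M, {I!t}, Suc j, P(I!t := p!t)))"

definition "Ot t = fst (ds t)"
definition "Mt t = fst (snd (ds t))"
definition "jt t = fst (snd (snd (ds t)))"
definition "Pt t = snd (snd (snd (ds t)))"
definition "bnd t \<longleftrightarrow> I!t \<notin> Mt t \<and> \<not> card (Mt t) < k"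

lemma ds0: "Ot 0 = {}" "Mt 0 = {}" "jt 0 = 0" "Pt 0 = (\<lambda>_. False)"
  by (simp_all add: Ot_def Mt_def jt_def Pt_def)

lemma dsS: "Ot (Suc t) = (if bnd t then Mt t else Ot t)"
  "Mt (Suc t) = (if bnd t then {I!t} else insert (I!t) (Mt t))"
  "jt (Suc t) = (if bnd t then Suc (jt t) else jt t)"
  "Pt (Suc t) = (Pt t)(I!t := p!t)"
  by (auto simp: Ot_def Mt_def jt_def Pt_def bnd_def split: prod.splits)

lemma fold_ds: "t \<le> nI \<Longrightarrow> foldl (pf k) ({},0) (take t I) = (Mt t, jt t)"
proof (induction t)
  case 0 then show ?case by (simp add: ds0)
next
  case (Suc t)
  then have "take (Suc t) I = take t I @ [I!t]" by (simp add: take_Suc_conv_app_nth)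
  then show ?case using Suc by (simp add: dsS pf_def bnd_def)
qed

lemma ph_jt: "i < nI \<Longrightarrow> ph i = jt (Suc i)"
  unfolding phase_def using phase_aux_nth[of i I k "{}" 0] fold_ds[of "Suc i"] by simp

lemma jt_Suc: "jt t \<le> jt (Suc t)" "jt (Suc t) \<le> Suc (jt t)"
  by (auto simp: dsS)

lemma jt_mono: "t \<le> t' \<Longrightarrow> jt t \<le> jt t'"
proof (induction t' rule: dec_induct)
  case base then show ?case by simp
next
  case (step m) then show ?case using jt_Suc(1)[of m] by simp
qed

lemma ph_mono: "i \<le> i' \<Longrightarrow> i' < nI \<Longrightarrow> ph i \<le> ph i'"
  using ph_jt jt_mono by simp

lemma ph_le_jt: "i < t \<Longrightarrow> t \<le> nI \<Longrightarrow> ph i \<le> jt t"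
  using ph_jt jt_mono by simp

lemma basic: "finite (Mt t) \<and> finite (Ot t) \<and> card (Mt t) \<le> k \<and> card (Ot t) \<le> k \<and>
   (jt t = 0 \<longrightarrow> Ot t = {}) \<and> (0 < jt t \<longrightarrow> card (Ot t) = k)"
proof (induction t)
  case 0 then show ?case using k1 by (simp add: ds0)
next
  case (Suc t)
  show ?case
  proof (cases "bnd t")
    case True then show ?thesis using Suc k1 by (simp add: dsS bnd_def)
  next
    case False then show ?thesis using Suc by (auto simp add: dsS bnd_def card_insert_if)
  qed
qed

lemma finM: "finite (Mt t)" and finO: "finite (Ot t)" and cardM: "card (Mt t) \<le> k"
  and cardO: "card (Ot t) \<le> k" and O0: "jt t = 0 \<Longrightarrow> Ot t = {}" and Ok: "0 < jt t \<Longrightarrow> card (Ot t) = k"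
  using basic[of t] by auto

lemma M_char: "t \<le> nI \<Longrightarrow> Mt t = {I!i | i. i < t \<and> ph i = jt t}"
proof (induction t)
  case 0 then show ?case by (simp add: ds0)
next
  case (Suc t)
  have IH: "Mt t = {I!i | i. i < t \<and> ph i = jt t}" using Suc by simp
  have pt: "ph t = jt (Suc t)" using Suc ph_jt by simp
  show ?case
  proof (cases "bnd t")
    case True
    have "\<And>i. i < t \<Longrightarrow> ph i \<noteq> jt (Suc t)" using ph_le_jt[of _ t] Suc True by (fastforce simp: dsS)
    then have "{I!i | i. i < Suc t \<and> ph i = jt (Suc t)} = {I!t}" using pt by (auto simp: less_Suc_eq)
    then show ?thesis using True by (simp add: dsS)
  next
    case False
    then have "{I!i | i. i < Suc t \<and> ph i = jt (Suc t)} = insert (I!t) {I!i | i. i < t \<and> ph i = jt t}"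
      using pt by (auto simp: dsS less_Suc_eq)
    then show ?thesis using False IH by (simp add: dsS)
  qed
qed

lemma O_char: "t \<le> nI \<Longrightarrow> Ot t = {I!i | i. i < t \<and> Suc (ph i) = jt t}"
proof (induction t)
  case 0 then show ?case by (simp add: ds0)
next
  case (Suc t)
  have IH: "Ot t = {I!i | i. i < t \<and> Suc (ph i) = jt t}" using Suc by simp
  have pt: "ph t = jt (Suc t)" using Suc ph_jt by simp
  show ?case
  proof (cases "bnd t")
    case True
    have "{I!i | i. i < Suc t \<and> Suc (ph i) = jt (Suc t)} = {I!i | i. i < t \<and> ph i = jt t}"
      using pt True by (auto simp: dsS less_Suc_eq)
    then show ?thesis using True M_char[of t] Suc by (simp add: dsS)
  next
    case False
    then have "{I!i | i. i < Suc t \<and> Suc (ph i) = jt (Suc t)} = {I!i | i. i < t \<and> Suc (ph i) = jt t}"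
      using pt by (auto simp: dsS less_Suc_eq)
    then show ?thesis using False IH by (simp add: dsS)
  qed
qed

lemma P_last: "i < t \<Longrightarrow> I!i = q \<Longrightarrow> (\<forall>i'. i < i' \<and> i' < t \<longrightarrow> I!i' \<noteq> q) \<Longrightarrow> Pt t q = p!i"
proof (induction t)
  case 0 then show ?case by simp
next
  case (Suc t)
  show ?case
  proof (cases "i = t")
    case True then show ?thesis using Suc by (simp add: dsS)
  next
    case False
    then have it: "i < t" "I!t \<noteq> q" using Suc by auto
    then have "Pt t q = p!i" using Suc.IH Suc.prems by auto
    then show ?thesis using it by (auto simp add: dsS)
  qed
qed

definition later :: "nat \<Rightarrow> 'a \<Rightarrow> bool" where
  "later t q \<longleftrightarrow> (\<exists>i. t \<le> i \<and> i < nI \<and> ph i = jt t \<and> I!i = q)"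

lemma nb_ph: "t < nI \<Longrightarrow> \<not> bnd t \<Longrightarrow> ph t = jt t"
  using ph_jt[of t] by (simp add: dsS)

lemma b_ph: "t < nI \<Longrightarrow> bnd t \<Longrightarrow> ph t = Suc (jt t)"
  using ph_jt[of t] by (simp add: dsS)

lemma nb_later_self: "t < nI \<Longrightarrow> \<not> bnd t \<Longrightarrow> later t (I!t)"
  unfolding later_def using nb_ph by auto

lemma nb_later: "t < nI \<Longrightarrow> \<not> bnd t \<Longrightarrow> q \<noteq> I!t \<Longrightarrow> later (Suc t) q = later t q"
proof -
  assume a: "t < nI" "\<not> bnd t" "q \<noteq> I!t"
  have j: "jt (Suc t) = jt t" using a by (simp add: dsS)
  show ?thesis unfolding later_def j
  proof
    assume "\<exists>i\<ge>Suc t. i < nI \<and> ph i = jt t \<and> I ! i = q"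
    then obtain i where "i\<ge>Suc t" "i < nI" "ph i = jt t" "I ! i = q" by blast
    then show "\<exists>i\<ge>t. i < nI \<and> ph i = jt t \<and> I ! i = q" by (intro exI[of _ i]) auto
  next
    assume "\<exists>i\<ge>t. i < nI \<and> ph i = jt t \<and> I ! i = q"
    then obtain i where i: "i \<ge> t" "i < nI" "ph i = jt t" "I!i = q" by blast
    then have "i \<noteq> t" using a by auto
    then have "i \<ge> Suc t" using i by simp
    then show "\<exists>i\<ge>Suc t. i < nI \<and> ph i = jt t \<and> I ! i = q" using i by blast
  qed
qed

lemma b_later: "t < nI \<Longrightarrow> bnd t \<Longrightarrow> \<not> later t q"
  unfolding later_def using b_ph ph_mono by (metis Suc_n_not_le_n)

lemma later_card: "t \<le> nI \<Longrightarrow> card (Mt t \<union> {q. later t q}) \<le> k"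
proof (induction "nI - t" arbitrary: t)
  case 0
  then have "t = nI" by simp
  then have "{q. later t q} = {}" unfolding later_def by auto
  then show ?case using cardM by simp
next
  case (Suc m)
  then have t: "t < nI" by simp
  show ?case
  proof (cases "bnd t")
    case True
    then have "Mt t \<union> {q. later t q} = Mt t" using b_later t by auto
    then show ?thesis using cardM by simp
  next
    case False
    have "Mt (Suc t) \<union> {q. later (Suc t) q} = Mt t \<union> {q. later t q}"
      using False nb_later[OF t False] nb_later_self[OF t False] by (auto simp: dsS) metis
    moreover have "card (Mt (Suc t) \<union> {q. later (Suc t) q}) \<le> k" using Suc t by simp
    ultimately show ?thesis by simp
  qed
qed

end


definition Hn :: "nat \<Rightarrow> real" where "Hn u = (\<Sum>j=1..u. 1 / real j)"

lemma Hn_nonneg: "Hn u \<ge> 0" unfolding Hn_def by (rule sum_nonneg) auto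

lemma Hn_mono: "a \<le> b \<Longrightarrow> Hn a \<le> Hn b"
  unfolding Hn_def by (rule sum_mono2) auto

lemma Hn_Suc: "Hn (Suc u) = Hn u + 1 / real (Suc u)"
  unfolding Hn_def by simp

context mpl
begin

definition "Z t = Ot t - Mt t"
definition "Z0 t = {q \<in> Z t. \<not> Pt t q}"
definition "Z1 t = {q \<in> Z t. Pt t q}"
definition "ea t = card {q \<in> Z1 t. later t q}"
definition "aa t = card {q \<in> Z0 t. \<not> later t q}"
definition "u0 t = card (Z0 t)"
definition "newr i \<longleftrightarrow> I!i \<notin> Mt i \<and> I!i \<notin> Ot (Suc i)"
definition "NF t = card {i. t \<le> i \<and> i < nI \<and> newr i}"
definition "E1F t = card {i. counted k I i \<and> p!i \<and> \<not> pstar k I i \<and> jt t \<le> ph i}"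
definition "A0F t = card {i. counted k I i \<and> \<not> p!i \<and> pstar k I i \<and> jt t \<le> ph i}"
definition "Phi t = real (NF t) + real (ea t) + real (E1F t) + real (aa t) * Hn (u0 t) + Hn k * real (A0F t)"

lemma Phi_nonneg: "Phi t \<ge> 0"
  unfolding Phi_def using Hn_nonneg by simp

lemma finZ: "finite (Z t)" "finite (Z0 t)" "finite (Z1 t)"
  using finO by (auto simp: Z_def Z0_def Z1_def)

lemma Z_disj: "Z0 t \<inter> Z1 t = {}" "Z0 t \<union> Z1 t = Z t" "Mt t \<inter> Z t = {}" "Z0 t \<subseteq> Z t" "Z1 t \<subseteq> Z t" "Z t \<subseteq> Ot t"
  by (auto simp: Z_def Z0_def Z1_def)

lemma Z_j0: "jt t = 0 \<Longrightarrow> Z t = {} \<and> Z0 t = {} \<and> Z1 t = {}"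
  using O0 by (auto simp: Z_def Z0_def Z1_def)

lemma nb_data:
  assumes "\<not> bnd t"
  shows "Ot (Suc t) = Ot t" "Mt (Suc t) = insert (I!t) (Mt t)" "jt (Suc t) = jt t"
    "Z (Suc t) = Z t - {I!t}" "Z0 (Suc t) = Z0 t - {I!t}" "Z1 (Suc t) = Z1 t - {I!t}"
  using assms by (auto simp: dsS Z_def Z0_def Z1_def)

lemma NF_Suc: "t < nI \<Longrightarrow> NF t = NF (Suc t) + (if newr t then 1 else 0)"
proof -
  assume t: "t < nI"
  have "{i. t \<le> i \<and> i < nI \<and> newr i} = {i. Suc t \<le> i \<and> i < nI \<and> newr i} \<union> (if newr t then {t} else {})"
    using t by (auto simp: le_eq_less_or_eq Suc_le_eq)
  moreover have "finite {i. Suc t \<le> i \<and> i < nI \<and> newr i}" by simp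
  ultimately show ?thesis unfolding NF_def by (auto simp: card_insert_if)
qed

lemma Phi_nb:
  assumes t: "t < nI" and nb: "\<not> bnd t"
  shows "Phi t = Phi (Suc t) + (if I!t \<notin> Mt t \<and> I!t \<notin> Ot t then 1 else 0)
            + (if I!t \<in> Z1 t then 1 else 0) + (if I!t \<in> Z0 t then real (aa t) / real (u0 t) else 0)"
proof -
  let ?r = "I!t"
  note d = nb_data[OF nb]
  have lat: "\<And>q. q \<noteq> ?r \<Longrightarrow> later (Suc t) q = later t q" using nb_later[OF t nb] .
  have latr: "later t ?r" using nb_later_self[OF t nb] .
  have nf: "NF t = NF (Suc t) + (if ?r \<notin> Mt t \<and> ?r \<notin> Ot t then 1 else 0)"
    using NF_Suc[OF t] d unfolding newr_def by simp
  have e1: "E1F (Suc t) = E1F t" "A0F (Suc t) = A0F t" unfolding E1F_def A0F_def using d by simp_all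
  have ea: "real (ea t) = real (ea (Suc t)) + (if ?r \<in> Z1 t then 1 else 0)"
  proof -
    have s: "{q \<in> Z1 (Suc t). later (Suc t) q} = {q \<in> Z1 t. later t q} - {?r}"
      using d lat by auto
    have fin: "finite {q \<in> Z1 t. later t q}" using finZ by simp
    show ?thesis
    proof (cases "?r \<in> Z1 t")
      case True
      then have "?r \<in> {q \<in> Z1 t. later t q}" using latr by simp
      then have "card {q \<in> Z1 t. later t q} = Suc (card ({q \<in> Z1 t. later t q} - {?r}))"
        using fin by (metis card_Suc_Diff1)
      then show ?thesis using True s unfolding ea_def by simp
    next
      case False
      then have "{q \<in> Z1 t. later t q} - {?r} = {q \<in> Z1 t. later t q}" by auto
      then show ?thesis using False s unfolding ea_def by simp
    qed
  qed
  have aa: "aa (Suc t) = aa t"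
  proof -
    have "{q \<in> Z0 (Suc t). \<not> later (Suc t) q} = {q \<in> Z0 t. \<not> later t q}"
    proof -
      have "\<And>q. q \<in> Z0 t \<Longrightarrow> \<not> later t q \<Longrightarrow> q \<noteq> I!t" using latr by auto
      then show ?thesis using d lat by auto
    qed
    then show ?thesis unfolding aa_def by simp
  qed
  have u0: "u0 t = u0 (Suc t) + (if ?r \<in> Z0 t then 1 else 0)"
  proof (cases "?r \<in> Z0 t")
    case True
    moreover have "card (Z0 t) > 0" using True finZ card_gt_0_iff by blast
    ultimately show ?thesis unfolding u0_def d using finZ by simp
  next
    case False
    then show ?thesis unfolding u0_def d by simp
  qed
  have hh: "real (aa t) * Hn (u0 t) = real (aa t) * Hn (u0 (Suc t)) + (if ?r \<in> Z0 t then real (aa t) / real (u0 t) else 0)"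
  proof (cases "?r \<in> Z0 t")
    case True
    then have "u0 t = Suc (u0 (Suc t))" using u0 by simp
    then show ?thesis using True by (simp add: Hn_Suc algebra_simps)
  next
    case False then show ?thesis using u0 by simp
  qed
  show ?thesis unfolding Phi_def using nf e1 ea aa hh by simp
qed

definition "xs = zip I p"

definition st :: "nat \<Rightarrow> 'a set \<Rightarrow> 'a set \<Rightarrow> 'a mp_state" where
  "st t S1 S0 = (Mt t \<union> (Z1 t - S1) \<union> (Z0 t - S0), Mt t, Pt t)"

definition "avgE t S1 h = (\<Sum>S\<in>fam (Z0 t) h. E k (st t S1 S) (drop t xs)) / real (card (fam (Z0 t) h))"

definition "minv t S1 h \<longleftrightarrow> S1 \<subseteq> Z1 t \<and> (0 < h \<longrightarrow> S1 = Z1 t) \<and>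
   (0 < jt t \<longrightarrow> card S1 + h = card (Mt t - Ot t)) \<and> (jt t = 0 \<longrightarrow> h = 0)"

lemma drop_xs: "t < nI \<Longrightarrow> drop t xs = (I!t, p!t) # drop (Suc t) xs"
  unfolding xs_def using Cons_nth_drop_Suc[of t "zip I p"] len by simp

lemma cache_card:
  assumes inv: "minv t S1 h" and S: "S \<in> fam (Z0 t) h" and j: "0 < jt t"
  shows "card (Mt t \<union> (Z1 t - S1) \<union> (Z0 t - S)) = k"
proof -
  have S1: "S1 \<subseteq> Z1 t" and c: "card S1 + h = card (Mt t - Ot t)" using inv j unfolding minv_def by auto
  have SS: "S \<subseteq> Z0 t" "card S = h" using S unfolding fam_def by auto
  have f: "finite (Mt t)" "finite (Z0 t)" "finite (Z1 t)" "finite (Ot t)" using finM finZ finO by auto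
  have d1: "(Mt t \<union> (Z1 t - S1)) \<inter> (Z0 t - S) = {}" "Mt t \<inter> (Z1 t - S1) = {}" using Z_disj[of t] by auto
  have "card (Mt t \<union> (Z1 t - S1) \<union> (Z0 t - S)) = card (Mt t \<union> (Z1 t - S1)) + card (Z0 t - S)"
    using f d1 by (intro card_Un_disjoint) auto
  also have "card (Mt t \<union> (Z1 t - S1)) = card (Mt t) + card (Z1 t - S1)"
    using f d1 by (intro card_Un_disjoint) auto
  finally have "card (Mt t \<union> (Z1 t - S1) \<union> (Z0 t - S)) = card (Mt t) + card (Z1 t - S1) + card (Z0 t - S)" .
  also have "card (Z1 t - S1) = card (Z1 t) - card S1" using S1 f by (simp add: card_Diff_subset finite_subset)
  also have "card (Z0 t - S) = card (Z0 t) - h" using SS f by (simp add: card_Diff_subset finite_subset)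
  finally have e: "card (Mt t \<union> (Z1 t - S1) \<union> (Z0 t - S)) = card (Mt t) + (card (Z1 t) - card S1) + (card (Z0 t) - h)" .
  have z: "card (Z t) = card (Z0 t) + card (Z1 t)" using f Z_disj[of t] card_Un_disjoint[of "Z0 t" "Z1 t"] by simp
  have m: "card (Mt t) = card (Mt t \<inter> Ot t) + card (Mt t - Ot t)"
    using f by (metis card_Int_Diff)
  have o: "card (Ot t) = card (Ot t \<inter> Mt t) + card (Z t)"
    using f unfolding Z_def by (metis card_Int_Diff)
  have le1: "card S1 \<le> card (Z1 t)" using S1 f by (simp add: card_mono)
  have le0: "h \<le> card (Z0 t)" using SS f by (metis card_mono)
  have "card (Ot t) = k" using Ok j by simp
  then show ?thesis using e z m o le1 le0 c by (simp add: Int_commute)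
qed

lemma h_le_aa:
  assumes t: "t \<le> nI" and inv: "minv t S1 h" and h: "0 < h"
  shows "h \<le> aa t"
proof -
  have j: "0 < jt t" using inv h unfolding minv_def by auto
  have S1: "S1 = Z1 t" and c: "card S1 + h = card (Mt t - Ot t)" using inv h j unfolding minv_def by auto
  let ?L = "{q. later t q}"
  have f: "finite (Mt t)" "finite (Z0 t)" "finite (Z1 t)" "finite (Ot t)" "finite (Z t)" using finM finZ finO by auto
  have fL: "finite (Z t \<inter> ?L)" using f by simp
  have "card (Mt t \<union> (Z t \<inter> ?L)) \<le> card (Mt t \<union> ?L)"
  proof (rule card_mono)
    have "?L \<subseteq> set I" unfolding later_def by auto
    then show "finite (Mt t \<union> ?L)" using f by (auto intro: finite_subset)
  qed auto
  also have "\<dots> \<le> k" using later_card t .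
  finally have A: "card (Mt t) + card (Z t \<inter> ?L) \<le> k"
    using f Z_disj[of t] by (subst (asm) card_Un_disjoint) auto
  have m: "card (Mt t) = card (Mt t \<inter> Ot t) + card (Mt t - Ot t)"
    using f by (metis card_Int_Diff)
  have o: "card (Ot t) = card (Ot t \<inter> Mt t) + card (Z t)"
    using f unfolding Z_def by (metis card_Int_Diff)
  have ok: "card (Ot t) = k" using Ok j by simp
  have zl: "card (Z t \<inter> ?L) = card (Z0 t \<inter> ?L) + card (Z1 t \<inter> ?L)"
  proof -
    have "Z t \<inter> ?L = (Z0 t \<inter> ?L) \<union> (Z1 t \<inter> ?L)" using Z_disj[of t] by auto
    moreover have "card ((Z0 t \<inter> ?L) \<union> (Z1 t \<inter> ?L)) = card (Z0 t \<inter> ?L) + card (Z1 t \<inter> ?L)"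
      using f Z_disj[of t] by (intro card_Un_disjoint) auto
    ultimately show ?thesis by simp
  qed
  have z: "card (Z t) = card (Z0 t) + card (Z1 t)" using f Z_disj[of t] card_Un_disjoint[of "Z0 t" "Z1 t"] by simp
  have a: "aa t + card (Z0 t \<inter> ?L) = card (Z0 t)"
  proof -
    have "Z0 t = {q \<in> Z0 t. \<not> later t q} \<union> (Z0 t \<inter> ?L)" "{q \<in> Z0 t. \<not> later t q} \<inter> (Z0 t \<inter> ?L) = {}" by auto
    moreover have "card ({q \<in> Z0 t. \<not> later t q} \<union> (Z0 t \<inter> ?L)) = card {q \<in> Z0 t. \<not> later t q} + card (Z0 t \<inter> ?L)"
      using f by (intro card_Un_disjoint) auto
    ultimately show ?thesis unfolding aa_def by simp
  qed
  have z1l: "card (Z1 t \<inter> ?L) \<le> card (Z1 t)" using f by (simp add: card_mono)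
  show ?thesis using A m o ok zl z a c S1 z1l by (simp add: Int_commute)
qed

end


context mpl
begin

definition "li t q = (GREATEST i. i < t \<and> I!i = q)"

lemma li_props:
  assumes t: "t \<le> nI" and q: "q \<in> Mt t"
  shows "li t q < t" "I!(li t q) = q" "ph (li t q) = jt t" "\<And>i'. li t q < i' \<Longrightarrow> i' < t \<Longrightarrow> I!i' \<noteq> q"
proof -
  obtain i0 where i0: "i0 < t" "ph i0 = jt t" "I!i0 = q" using M_char[OF t] q by auto
  have bd: "\<forall>y. y < t \<and> I!y = q \<longrightarrow> y \<le> t" by auto
  have G: "li t q < t \<and> I!(li t q) = q" unfolding li_def
    using GreatestI_nat[of "\<lambda>i. i < t \<and> I!i = q" i0 t] i0 bd by blast
  then show "li t q < t" "I!(li t q) = q" by auto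
  have le: "i0 \<le> li t q" unfolding li_def
    using Greatest_le_nat[of "\<lambda>i. i < t \<and> I!i = q" i0 t] i0 bd by blast
  have "ph i0 \<le> ph (li t q)" using ph_mono[OF le] G t by simp
  moreover have "ph (li t q) \<le> jt t" using ph_le_jt G t by simp
  ultimately show "ph (li t q) = jt t" using i0 by simp
  fix i' assume "li t q < i'" "i' < t"
  then show "I!i' \<noteq> q" unfolding li_def
    using Greatest_le_nat[of "\<lambda>i. i < t \<and> I!i = q" i' t] bd
    by (metis leD li_def)
qed

lemma b_counted:
  assumes t: "t < nI" and b: "bnd t" and q: "q \<in> Mt t"
  shows "counted k I (li t q)" "ph (li t q) = jt t" "p!(li t q) = Pt t q"
    "pstar k I (li t q) \<longleftrightarrow> \<not> later (Suc t) q"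
proof -
  note L = li_props[OF less_imp_le[OF t] q]
  have pt: "ph t = Suc (jt t)" using b_ph[OF t b] .
  have pl: "ph t \<le> ph (nI - 1)" using ph_mono[of t "nI - 1"] t by simp
  show "ph (li t q) = jt t" using L by simp
  show "counted k I (li t q)" unfolding counted_def
  proof (intro conjI)
    show "li t q < nI" using L t by simp
    show "ph (li t q) < ph (nI - 1)" using L pt pl by simp
    show "\<not> (\<exists>i'>li t q. i' < nI \<and> ph i' = ph (li t q) \<and> I ! i' = I ! li t q)"
    proof
      assume "\<exists>i'>li t q. i' < nI \<and> ph i' = ph (li t q) \<and> I ! i' = I ! li t q"
      then obtain i' where i': "i' > li t q" "i' < nI" "ph i' = jt t" "I!i' = q" using L by auto
      show False
      proof (cases "i' < t")
        case True then show False using L(4)[OF i'(1) True] i' by simp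
      next
        case False
        then have "ph t \<le> ph i'" using ph_mono[of t i'] i' by simp
        then show False using pt i' by simp
      qed
    qed
  qed
  show "p!(li t q) = Pt t q" using P_last[of "li t q" t q] L by simp
  have r: "I!t \<notin> Mt t" using b unfolding bnd_def by simp
  have j: "jt (Suc t) = Suc (jt t)" using b by (simp add: dsS)
  show "pstar k I (li t q) \<longleftrightarrow> \<not> later (Suc t) q"
    unfolding pstar_def later_def j L(2) L(3)
  proof
    assume "\<not> (\<exists>i'<nI. ph i' = Suc (jt t) \<and> I ! i' = q)"
    then show "\<not> (\<exists>i\<ge>Suc t. i < nI \<and> ph i = Suc (jt t) \<and> I ! i = q)" by auto
  next
    assume a: "\<not> (\<exists>i\<ge>Suc t. i < nI \<and> ph i = Suc (jt t) \<and> I ! i = q)"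
    show "\<not> (\<exists>i'<nI. ph i' = Suc (jt t) \<and> I ! i' = q)"
    proof
      assume "\<exists>i'<nI. ph i' = Suc (jt t) \<and> I ! i' = q"
      then obtain i' where i': "i' < nI" "ph i' = Suc (jt t)" "I!i' = q" by auto
      consider "i' < t" | "i' = t" | "i' \<ge> Suc t" by linarith
      then show False
      proof cases
        case 1 then show False using ph_le_jt[of i' t] t i' by simp
      next
        case 2 then show False using r q i' by simp
      next
        case 3 then show False using a i' by auto
      qed
    qed
  qed
qed

lemma b_data:
  assumes "bnd t"
  shows "Ot (Suc t) = Mt t" "Mt (Suc t) = {I!t}" "jt (Suc t) = Suc (jt t)" "Pt (Suc t) = (Pt t)(I!t := p!t)"
    "Z (Suc t) = Mt t" "Z0 (Suc t) = {q \<in> Mt t. \<not> Pt t q}" "Z1 (Suc t) = {q \<in> Mt t. Pt t q}"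
    "card (Mt t) = k" "I!t \<notin> Mt t"
  using assms cardM[of t] by (auto simp: dsS Z_def Z0_def Z1_def bnd_def)

lemma Phi_b:
  assumes t: "t < nI" and b: "bnd t"
  shows "1 + Phi (Suc t) \<le> Phi t"
proof -
  note d = b_data[OF b]
  let ?B1 = "{i. counted k I i \<and> p!i \<and> \<not> pstar k I i \<and> ph i = jt t}"
  let ?B0 = "{i. counted k I i \<and> \<not> p!i \<and> pstar k I i \<and> ph i = jt t}"
  have finB: "finite ?B1" "finite ?B0"
    by (auto intro: finite_subset[of _ "{..<nI}"] simp: counted_def)
  have e1: "E1F t = E1F (Suc t) + card ?B1"
  proof -
    have "{i. counted k I i \<and> p!i \<and> \<not> pstar k I i \<and> jt t \<le> ph i}
      = {i. counted k I i \<and> p!i \<and> \<not> pstar k I i \<and> jt (Suc t) \<le> ph i} \<union> ?B1" using d by auto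
    moreover have "card ({i. counted k I i \<and> p!i \<and> \<not> pstar k I i \<and> jt (Suc t) \<le> ph i} \<union> ?B1)
      = card {i. counted k I i \<and> p!i \<and> \<not> pstar k I i \<and> jt (Suc t) \<le> ph i} + card ?B1"
      using d finB by (intro card_Un_disjoint) (auto intro: finite_subset[of _ "{..<nI}"] simp: counted_def)
    ultimately show ?thesis unfolding E1F_def by simp
  qed
  have a0: "A0F t = A0F (Suc t) + card ?B0"
  proof -
    have "{i. counted k I i \<and> \<not> p!i \<and> pstar k I i \<and> jt t \<le> ph i}
      = {i. counted k I i \<and> \<not> p!i \<and> pstar k I i \<and> jt (Suc t) \<le> ph i} \<union> ?B0" using d by auto
    moreover have "card ({i. counted k I i \<and> \<not> p!i \<and> pstar k I i \<and> jt (Suc t) \<le> ph i} \<union> ?B0)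
      = card {i. counted k I i \<and> \<not> p!i \<and> pstar k I i \<and> jt (Suc t) \<le> ph i} + card ?B0"
      using d finB by (intro card_Un_disjoint) (auto intro: finite_subset[of _ "{..<nI}"] simp: counted_def)
    ultimately show ?thesis unfolding A0F_def by simp
  qed
  have Pq: "\<And>q. q \<in> Mt t \<Longrightarrow> Pt (Suc t) q = Pt t q" using d by auto
  have ea: "ea (Suc t) \<le> card ?B1" unfolding ea_def
  proof (rule card_inj_on_le[where f="li t"])
    show "inj_on (li t) {q \<in> Z1 (Suc t). later (Suc t) q}"
      by (rule inj_on_inverseI[where g="\<lambda>i. I!i"]) (use li_props[OF less_imp_le[OF t]] d in auto)
    show "li t ` {q \<in> Z1 (Suc t). later (Suc t) q} \<subseteq> ?B1"
      using b_counted[OF t b] d by auto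
  qed (rule finB)
  have aa: "aa (Suc t) \<le> card ?B0" unfolding aa_def
  proof (rule card_inj_on_le[where f="li t"])
    show "inj_on (li t) {q \<in> Z0 (Suc t). \<not> later (Suc t) q}"
      by (rule inj_on_inverseI[where g="\<lambda>i. I!i"]) (use li_props[OF less_imp_le[OF t]] d in auto)
    show "li t ` {q \<in> Z0 (Suc t). \<not> later (Suc t) q} \<subseteq> ?B0"
      using b_counted[OF t b] d by auto
  qed (rule finB)
  have u0: "u0 (Suc t) \<le> k"
  proof -
    have "u0 (Suc t) \<le> card (Mt t)" unfolding u0_def d(6) using finM by (intro card_mono) auto
    then show ?thesis using d by simp
  qed
  have nf: "NF t = NF (Suc t) + 1" using NF_Suc[OF t] d unfolding newr_def by simp
  have H: "real (aa (Suc t)) * Hn (u0 (Suc t)) \<le> real (card ?B0) * Hn k"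
    using aa Hn_mono[OF u0] Hn_nonneg by (intro mult_mono) auto
  have "0 \<le> real (ea t) + real (aa t) * Hn (u0 t)" using Hn_nonneg by simp
  then show ?thesis unfolding Phi_def using nf e1 a0 ea H by (simp add: algebra_simps)
qed

end


lemma avg_le:
  fixes f :: "'b \<Rightarrow> real"
  assumes "finite A" "\<And>S. S \<in> A \<Longrightarrow> f S \<le> B" "0 \<le> B"
  shows "sum f A / real (card A) \<le> B"
proof (cases "A = {}")
  case True then show ?thesis using assms by simp
next
  case False
  then have c: "real (card A) > 0" using assms(1) by (simp add: card_gt_0_iff)
  have "sum f A \<le> sum (\<lambda>_. B) A" using assms(2) by (rule sum_mono)
  then have "sum f A \<le> real (card A) * B" by simp
  then show ?thesis using c by (simp add: divide_le_eq mult.commute)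
qed

lemma fam0: "fam Z 0 = {{}}" if "finite Z"
proof -
  have "S = {}" if "S \<subseteq> Z" "card S = 0" for S
    using that \<open>finite Z\<close> finite_subset[OF that(1)] by auto
  then show ?thesis unfolding fam_def by auto
qed

lemma fam1_sum:
  fixes f :: "'a set \<Rightarrow> real"
  assumes "finite Z"
  shows "(\<Sum>S\<in>fam Z 1. f S) = (\<Sum>x\<in>Z. f {x})" "card (fam Z 1) = card Z"
proof -
  have e: "fam Z 1 = (\<lambda>x. {x}) ` Z" unfolding fam_def by (auto simp: card_Suc_eq)
  have i: "inj_on (\<lambda>x. {x}) Z" by (auto intro: inj_onI)
  show "(\<Sum>S\<in>fam Z 1. f S) = (\<Sum>x\<in>Z. f {x})" unfolding e using sum.reindex[OF i] by simp
  show "card (fam Z 1) = card Z" unfolding e using card_image[OF i] .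
qed


lemma avg_evict0:
  fixes F g :: "'a set \<Rightarrow> real"
  assumes Z: "finite Z" and h: "h < card Z"
    and F: "\<And>S. S \<in> fam Z h \<Longrightarrow> F S = 1 + (\<Sum>x\<in>Z - S. g (insert x S)) / real (card Z - h)"
  shows "(\<Sum>S\<in>fam Z h. F S) / real (card (fam Z h)) = 1 + (\<Sum>S\<in>fam Z (Suc h). g S) / real (card (fam Z (Suc h)))"
proof -
  have c: "real (card (fam Z h)) > 0" using fam_card[OF Z] h by simp
  have "(\<Sum>S\<in>fam Z h. F S) = (\<Sum>S\<in>fam Z h. 1 + (\<Sum>x\<in>Z - S. g (insert x S)) / real (card Z - h))"
    using F by (rule sum.cong[OF refl])
  also have "\<dots> = real (card (fam Z h)) + (\<Sum>S\<in>fam Z h. (\<Sum>x\<in>Z - S. g (insert x S)) / real (card Z - h))"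
    by (simp add: sum.distrib)
  finally have "(\<Sum>S\<in>fam Z h. F S) / real (card (fam Z h)) = 1 + (\<Sum>S\<in>fam Z h. (\<Sum>x\<in>Z - S. g (insert x S)) / real (card Z - h)) / real (card (fam Z h))"
    using c by (simp add: add_divide_distrib)
  also have "\<dots> = 1 + (\<Sum>S\<in>fam Z (Suc h). g S) / real (card (fam Z (Suc h)))"
    using avg_add[OF Z h] by simp
  finally show ?thesis .
qed

context mpl
begin

lemma avgE0: "avgE t S1 0 = E k (st t S1 {}) (drop t xs)"
  unfolding avgE_def fam0[OF finZ(2)] by simp

lemma ES: "t < nI \<Longrightarrow> E k (st t S1 S) (drop t xs) = E k (Mt t \<union> (Z1 t - S1) \<union> (Z0 t - S), Mt t, Pt t) ((I!t, p!t) # drop (Suc t) xs)"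
  unfolding st_def using drop_xs by simp

lemma fam_fin: "finite (fam (Z0 t) h)" using fam_finite[OF finZ(2)] .

lemma fam_sub: "S \<in> fam (Z0 t) h \<Longrightarrow> S \<subseteq> Z0 t \<and> card S = h"
  unfolding fam_def by auto

lemma Zmem: "q \<in> Z0 t \<longleftrightarrow> q \<in> Ot t \<and> q \<notin> Mt t \<and> \<not> Pt t q" "q \<in> Z1 t \<longleftrightarrow> q \<in> Ot t \<and> q \<notin> Mt t \<and> Pt t q"
  "q \<in> Z t \<longleftrightarrow> q \<in> Ot t \<and> q \<notin> Mt t"
  by (auto simp: Z0_def Z1_def Z_def)

lemma case_B:
  assumes t: "t < nI" and b: "bnd t" and inv: "minv t S1 h"
    and IH: "\<And>S1 h. minv (Suc t) S1 h \<Longrightarrow> avgE (Suc t) S1 h \<le> Phi (Suc t)"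
  shows "avgE t S1 h \<le> Phi t"
proof -
  note d = b_data[OF b]
  let ?r = "I!t" and ?M = "Mt t" and ?P' = "(Pt t)(I!t := p!t)"
  let ?xs' = "drop (Suc t) xs"
  have CM: "Mt t \<union> (Z1 t - S1) \<union> (Z0 t - S) = Mt t" if S: "S \<in> fam (Z0 t) h" for S
  proof (cases "jt t = 0")
    case True then show ?thesis using Z_j0 by auto
  next
    case False
    then have "card (Mt t \<union> (Z1 t - S1) \<union> (Z0 t - S)) = card (Mt t)" using cache_card[OF inv S] d by simp
    moreover have "finite (Mt t \<union> (Z1 t - S1) \<union> (Z0 t - S))" using finM finZ by simp
    ultimately show ?thesis by (metis Un_upper1 card_subset_eq Un_assoc)
  qed
  have Mne: "Mt t \<noteq> {}" using d k1 by auto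
  define U1 where "U1 = {q \<in> ?M. ?P' q}"
  have U1e: "U1 = Z1 (Suc t)" unfolding U1_def d using d by auto
  have step: "E k (?M, ?M, Pt t) ((?r, p!t) # ?xs') \<le> 1 + Phi (Suc t)"
  proof -
    have e: "E k (?M, ?M, Pt t) ((?r, p!t) # ?xs') = 1 + (\<Sum>q\<in>(if U1 \<noteq> {} then U1 else ?M). E k (insert ?r (?M - {q}), {?r}, ?P') ?xs') / card (if U1 \<noteq> {} then U1 else ?M)"
      unfolding U1_def by (rule E_step_phase) (use d finM Mne in auto)
    show ?thesis
    proof (cases "U1 \<noteq> {}")
      case True
      have "(\<Sum>q\<in>U1. E k (insert ?r (?M - {q}), {?r}, ?P') ?xs') / card U1 \<le> Phi (Suc t)"
      proof (rule avg_le)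
        show "finite U1" unfolding U1_def using finM by simp
        show "0 \<le> Phi (Suc t)" by (rule Phi_nonneg)
        fix x assume x: "x \<in> U1"
        have rM: "{?r} - ?M = {?r}" using d by auto
        have "minv (Suc t) {x} 0" unfolding minv_def using x U1e d rM by auto
        then have "avgE (Suc t) {x} 0 \<le> Phi (Suc t)" by (rule IH)
        moreover have "st (Suc t) {x} {} = (insert ?r (?M - {x}), {?r}, ?P')"
          unfolding st_def using d x U1e by auto
        ultimately show "E k (insert ?r (?M - {x}), {?r}, ?P') ?xs' \<le> Phi (Suc t)"
          unfolding avgE0 by simp
      qed
      then show ?thesis using e True by simp
    next
      case False
      have rM: "{?r} - ?M = {?r}" using d by auto
      have "minv (Suc t) {} 1" unfolding minv_def using False U1e d rM by auto
      then have A: "avgE (Suc t) {} 1 \<le> Phi (Suc t)" by (rule IH)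
      have Z0M: "Z0 (Suc t) = ?M" using d False U1e by auto
      have "avgE (Suc t) {} 1 = (\<Sum>x\<in>?M. E k (st (Suc t) {} {x}) ?xs') / card ?M"
        unfolding avgE_def Z0M fam1_sum[OF finM] by simp
      also have "\<dots> = (\<Sum>x\<in>?M. E k (insert ?r (?M - {x}), {?r}, ?P') ?xs') / card ?M"
      proof -
        have "st (Suc t) {} {x} = (insert ?r (?M - {x}), {?r}, ?P')" if "x \<in> ?M" for x
          unfolding st_def using d that False U1e by auto
        then show ?thesis by simp
      qed
      finally show ?thesis using e False A by simp
    qed
  qed
  show ?thesis unfolding avgE_def
  proof (rule avg_le[OF fam_fin])
    show "0 \<le> Phi t" by (rule Phi_nonneg)
    fix S assume S: "S \<in> fam (Z0 t) h"
    have "E k (st t S1 S) (drop t xs) \<le> 1 + Phi (Suc t)" unfolding ES[OF t] CM[OF S] by (rule step)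
    then show "E k (st t S1 S) (drop t xs) \<le> Phi t" using Phi_b[OF t b] by simp
  qed
qed

lemma case_H:
  assumes t: "t < nI" and r: "I!t \<in> Mt t" and inv: "minv t S1 h"
    and IH: "\<And>S1 h. minv (Suc t) S1 h \<Longrightarrow> avgE (Suc t) S1 h \<le> Phi (Suc t)"
  shows "avgE t S1 h \<le> Phi t"
proof -
  have nb: "\<not> bnd t" using r unfolding bnd_def by simp
  note d = nb_data[OF nb]
  have rZ: "I!t \<notin> Z t" "I!t \<notin> Z0 t" "I!t \<notin> Z1 t" using r Z_disj[of t] by auto
  have d2: "Mt (Suc t) = Mt t" "Z0 (Suc t) = Z0 t" "Z1 (Suc t) = Z1 t" using d r rZ by auto
  have Pst: "Pt (Suc t) = (Pt t)(I!t := p!t)" by (simp add: dsS)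
  have eq: "avgE t S1 h = avgE (Suc t) S1 h"
    unfolding avgE_def d2
  proof (intro arg_cong2[where f="(/)"] refl sum.cong)
    fix S assume S: "S \<in> fam (Z0 t) h"
    have "E k (st t S1 S) (drop t xs) = E k (Mt t \<union> (Z1 t - S1) \<union> (Z0 t - S), insert (I!t) (Mt t), (Pt t)(I!t := p!t)) (drop (Suc t) xs)"
      unfolding ES[OF t] using r by (intro E_step_hit) auto
    also have "\<dots> = E k (st (Suc t) S1 S) (drop (Suc t) xs)"
      unfolding st_def d2 Pst using r by (simp add: insert_absorb)
    finally show "E k (st t S1 S) (drop t xs) = E k (st (Suc t) S1 S) (drop (Suc t) xs)" .
  qed
  have "minv (Suc t) S1 h" using inv unfolding minv_def d2 d by (simp add: insert_absorb r)
  then have "avgE (Suc t) S1 h \<le> Phi (Suc t)" by (rule IH)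
  moreover have "Phi t = Phi (Suc t)" using Phi_nb[OF t nb] r rZ by simp
  ultimately show ?thesis using eq by simp
qed

lemma cache_facts:
  assumes t: "t < nI" and j: "0 < jt t" and inv: "minv t S1 h" and S: "S \<in> fam (Z0 t) h"
    and rM: "I!t \<notin> Mt t" and nb: "\<not> bnd t"
  shows "card (Mt t \<union> (Z1 t - S1) \<union> (Z0 t - S)) = k" "\<not> (Mt t \<union> (Z1 t - S1) \<union> (Z0 t - S)) \<subseteq> Mt t"
    "finite (Mt t \<union> (Z1 t - S1) \<union> (Z0 t - S))" "(Z1 t - S1) \<union> (Z0 t - S) \<noteq> {}"
proof -
  show c: "card (Mt t \<union> (Z1 t - S1) \<union> (Z0 t - S)) = k" by (rule cache_card[OF inv S j])
  have "card (Mt t) < k" using rM nb unfolding bnd_def by simp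
  show f: "finite (Mt t \<union> (Z1 t - S1) \<union> (Z0 t - S))" using finM finZ by simp
  show "\<not> (Mt t \<union> (Z1 t - S1) \<union> (Z0 t - S)) \<subseteq> Mt t"
  proof
    assume "Mt t \<union> (Z1 t - S1) \<union> (Z0 t - S) \<subseteq> Mt t"
    then have "card (Mt t \<union> (Z1 t - S1) \<union> (Z0 t - S)) \<le> card (Mt t)" using finM by (rule card_mono[rotated])
    then show False using c \<open>card (Mt t) < k\<close> by simp
  qed
  then show "(Z1 t - S1) \<union> (Z0 t - S) \<noteq> {}" by auto
qed

lemma E_evict:
  assumes t: "t < nI" and j: "0 < jt t" and inv: "minv t S1 h" and S: "S \<in> fam (Z0 t) h"
    and rM: "I!t \<notin> Mt t" and nb: "\<not> bnd t" and rC: "I!t \<notin> Mt t \<union> (Z1 t - S1) \<union> (Z0 t - S)"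
  shows "E k (st t S1 S) (drop t xs) = 1 + (\<Sum>q\<in>(if Z1 t - S1 \<noteq> {} then Z1 t - S1 else Z0 t - S).
           E k (insert (I!t) ((Mt t \<union> (Z1 t - S1) \<union> (Z0 t - S)) - {q}), insert (I!t) (Mt t), (Pt t)(I!t := p!t)) (drop (Suc t) xs))
         / card (if Z1 t - S1 \<noteq> {} then Z1 t - S1 else Z0 t - S)"
proof -
  note cf = cache_facts[OF t j inv S rM nb]
  let ?C = "Mt t \<union> (Z1 t - S1) \<union> (Z0 t - S)"
  have U1: "{q \<in> ?C - Mt t. ((Pt t)(I!t := p!t)) q} = Z1 t - S1"
    using rC Z_disj[of t] by (auto simp: Z0_def Z1_def)
  have CM: "?C - Mt t = (Z1 t - S1) \<union> (Z0 t - S)" using Z_disj[of t] by auto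
  have cand: "(if {q \<in> ?C - Mt t. ((Pt t)(I!t := p!t)) q} \<noteq> {} then {q \<in> ?C - Mt t. ((Pt t)(I!t := p!t)) q} else ?C - Mt t)
      = (if Z1 t - S1 \<noteq> {} then Z1 t - S1 else Z0 t - S)"
    unfolding U1 unfolding CM by (cases "Z1 t - S1 = {}") auto
  have nc: "\<not> card ?C < k" using cf(1) by simp
  note e = E_step_evict[where r="I!t" and C="?C" and M="Mt t" and P="Pt t" and b="p!t" and k=k and xs="drop (Suc t) xs", OF rC cf(3) nc cf(2)]
  show ?thesis unfolding ES[OF t] using e unfolding cand by simp
qed

lemma case_N:
  assumes t: "t < nI" and rM: "I!t \<notin> Mt t" and rO: "I!t \<notin> Ot t" and nb: "\<not> bnd t" and inv: "minv t S1 h"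
    and IH: "\<And>S1 h. minv (Suc t) S1 h \<Longrightarrow> avgE (Suc t) S1 h \<le> Phi (Suc t)"
  shows "avgE t S1 h \<le> Phi t"
proof -
  note d = nb_data[OF nb]
  let ?r = "I!t" and ?M = "Mt t" and ?P' = "(Pt t)(I!t := p!t)" and ?xs' = "drop (Suc t) xs"
  have rZ: "?r \<notin> Z t" "?r \<notin> Z0 t" "?r \<notin> Z1 t" using rO Z_disj[of t] by auto
  have d2: "Mt (Suc t) = insert ?r ?M" "Z0 (Suc t) = Z0 t" "Z1 (Suc t) = Z1 t" "Pt (Suc t) = ?P'" "jt (Suc t) = jt t"
    "Ot (Suc t) = Ot t"
    using d rZ by (auto simp: dsS)
  have Phi: "Phi t = Phi (Suc t) + 1" using Phi_nb[OF t nb] rM rO rZ by simp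
  have cM: "card (insert ?r ?M - Ot t) = Suc (card (?M - Ot t))"
  proof -
    have "insert ?r ?M - Ot t = insert ?r (?M - Ot t)" using rO by auto
    then show ?thesis using rM finM by simp
  qed
  show ?thesis
  proof (cases "jt t = 0")
    case True
    have h0: "h = 0" "S1 = {}" using inv True Z_j0[OF True] unfolding minv_def by auto
    have Zs: "Z0 t = {}" "Z1 t = {}" using Z_j0[OF True] by auto
    have cl: "card ?M < k" using rM nb unfolding bnd_def by simp
    have "avgE t S1 h = E k (st t {} {}) (drop t xs)" using h0 avgE0 by simp
    also have "\<dots> = 1 + E k (insert ?r ?M, insert ?r ?M, ?P') ?xs'"
      unfolding ES[OF t] Zs using rM cl by (simp add: E_step_load)
    also have "E k (insert ?r ?M, insert ?r ?M, ?P') ?xs' = avgE (Suc t) {} 0"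
      unfolding avgE0 st_def d2 Zs by simp
    also have "avgE (Suc t) {} 0 \<le> Phi (Suc t)"
      by (rule IH) (use True d2 Zs in \<open>simp add: minv_def\<close>)
    finally show ?thesis using Phi by simp
  next
    case False
    then have j: "0 < jt t" by simp
    have c: "card S1 + h = card (?M - Ot t)" using inv j unfolding minv_def by simp
    show ?thesis
    proof (cases "Z1 t - S1 \<noteq> {}")
      case True
      then have h0: "h = 0" using inv unfolding minv_def by auto
      have S0: "{} \<in> fam (Z0 t) 0" unfolding fam_def by simp
      have rC: "?r \<notin> ?M \<union> (Z1 t - S1) \<union> (Z0 t - {})" using rM rZ by auto
      have "avgE t S1 h = E k (st t S1 {}) (drop t xs)" using h0 avgE0 by simp
      also have "\<dots> = 1 + (\<Sum>q\<in>Z1 t - S1. E k (insert ?r ((?M \<union> (Z1 t - S1) \<union> (Z0 t - {})) - {q}), insert ?r ?M, ?P') ?xs') / card (Z1 t - S1)"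
        using E_evict[OF t j inv[unfolded h0] S0 rM nb rC] True by simp
      also have "\<dots> \<le> 1 + Phi (Suc t)"
      proof -
        have "(\<Sum>q\<in>Z1 t - S1. E k (insert ?r ((?M \<union> (Z1 t - S1) \<union> (Z0 t - {})) - {q}), insert ?r ?M, ?P') ?xs') / card (Z1 t - S1) \<le> Phi (Suc t)"
        proof (rule avg_le)
          show "finite (Z1 t - S1)" using finZ by simp
          show "0 \<le> Phi (Suc t)" by (rule Phi_nonneg)
          fix x assume x: "x \<in> Z1 t - S1"
          have "minv (Suc t) (insert x S1) 0"
            unfolding minv_def d2 using inv x j c cM finite_subset[OF _ finZ(3)]
            by (auto simp: minv_def card_insert_if)
          then have "avgE (Suc t) (insert x S1) 0 \<le> Phi (Suc t)" by (rule IH)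
          moreover have "st (Suc t) (insert x S1) {} = (insert ?r ((?M \<union> (Z1 t - S1) \<union> (Z0 t - {})) - {x}), insert ?r ?M, ?P')"
            unfolding st_def d2 using x Z_disj[of t] by auto
          ultimately show "E k (insert ?r ((?M \<union> (Z1 t - S1) \<union> (Z0 t - {})) - {x}), insert ?r ?M, ?P') ?xs' \<le> Phi (Suc t)"
            unfolding avgE0 by simp
        qed
        then show ?thesis by simp
      qed
      finally show ?thesis using Phi by simp
    next
      case False
      then have Z1S: "Z1 t - S1 = {}" by simp
      show ?thesis
      proof (cases "fam (Z0 t) h = {}")
        case True
        then show ?thesis unfolding avgE_def using Phi_nonneg by simp
      next
        case False
        then obtain S0 where S0: "S0 \<in> fam (Z0 t) h" by auto
        have "Z0 t - S0 \<noteq> {}" using cache_facts(4)[OF t j inv S0 rM nb] Z1S by simp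
        then have hu: "h < card (Z0 t)" using fam_sub[OF S0] finZ(2)
          by (metis Diff_eq_empty_iff card_seteq le_neq_implies_less card_mono)
        have "avgE t S1 h = 1 + avgE (Suc t) S1 (Suc h)"
          unfolding avgE_def d2
        proof (rule avg_evict0[OF finZ(2) hu])
          fix S assume S: "S \<in> fam (Z0 t) h"
          have rC: "?r \<notin> ?M \<union> (Z1 t - S1) \<union> (Z0 t - S)" using rM rZ by auto
          have fS: "finite S" using fam_sub[OF S] finZ(2) finite_subset by blast
          have cZ: "card (Z0 t - S) = card (Z0 t) - h" using fam_sub[OF S] fS
            by (simp add: card_Diff_subset)
          have "E k (st t S1 S) (drop t xs) = 1 + (\<Sum>q\<in>Z0 t - S. E k (insert ?r ((?M \<union> (Z0 t - S)) - {q}), insert ?r ?M, ?P') ?xs') / card (Z0 t - S)"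
            using E_evict[OF t j inv S rM nb rC] Z1S by simp
          also have "(\<Sum>q\<in>Z0 t - S. E k (insert ?r ((?M \<union> (Z0 t - S)) - {q}), insert ?r ?M, ?P') ?xs')
             = (\<Sum>q\<in>Z0 t - S. E k (st (Suc t) S1 (insert q S)) ?xs')"
          proof (rule sum.cong[OF refl])
            fix q assume q: "q \<in> Z0 t - S"
            have "st (Suc t) S1 (insert q S) = (insert ?r ((?M \<union> (Z0 t - S)) - {q}), insert ?r ?M, ?P')"
              unfolding st_def d2 using q Z_disj[of t] Z1S by auto
            then show "E k (insert ?r ((?M \<union> (Z0 t - S)) - {q}), insert ?r ?M, ?P') ?xs' = E k (st (Suc t) S1 (insert q S)) ?xs'" by simp
          qed
          finally show "E k (st t S1 S) (drop t xs) = 1 + (\<Sum>x\<in>Z0 t - S. E k (st (Suc t) S1 (insert x S)) ?xs') / real (card (Z0 t) - h)"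
            using cZ by simp
        qed
        also have "avgE (Suc t) S1 (Suc h) \<le> Phi (Suc t)"
        proof (rule IH)
          have "S1 = Z1 t" using inv Z1S unfolding minv_def by auto
          then show "minv (Suc t) S1 (Suc h)" unfolding minv_def d2 using j c cM by simp
        qed
        finally show ?thesis using Phi by simp
      qed
    qed
  qed
qed

lemma jt_pos_Z: "q \<in> Z t \<Longrightarrow> 0 < jt t"
  using O0[of t] by (auto simp: Z_def)

lemma case_O1:
  assumes t: "t < nI" and rZ1: "I!t \<in> Z1 t" and nb: "\<not> bnd t" and inv: "minv t S1 h"
    and IH: "\<And>S1 h. minv (Suc t) S1 h \<Longrightarrow> avgE (Suc t) S1 h \<le> Phi (Suc t)"
  shows "avgE t S1 h \<le> Phi t"
proof -
  note d = nb_data[OF nb]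
  let ?r = "I!t" and ?M = "Mt t" and ?P' = "(Pt t)(I!t := p!t)" and ?xs' = "drop (Suc t) xs"
  have rM: "?r \<notin> ?M" and rO: "?r \<in> Ot t" and rZ0: "?r \<notin> Z0 t" using rZ1 Z_disj[of t] by (auto simp: Z1_def Z_def)
  have j: "0 < jt t" using rZ1 Z_disj[of t] jt_pos_Z by auto
  have d2: "Mt (Suc t) = insert ?r ?M" "Z0 (Suc t) = Z0 t" "Z1 (Suc t) = Z1 t - {?r}" "Pt (Suc t) = ?P'" "jt (Suc t) = jt t"
    "Ot (Suc t) = Ot t"
    using d rZ0 by (auto simp: dsS)
  have Phi: "Phi t = Phi (Suc t) + 1" using Phi_nb[OF t nb] rM rO rZ1 rZ0 by simp
  have cM: "card (insert ?r ?M - Ot t) = card (?M - Ot t)"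
  proof -
    have "insert ?r ?M - Ot t = ?M - Ot t" using rO by auto
    then show ?thesis by simp
  qed
  have c: "card S1 + h = card (?M - Ot t)" "S1 \<subseteq> Z1 t" using inv j unfolding minv_def by auto
  have fS1: "finite S1" using c(2) finZ(3) finite_subset by blast
  show ?thesis
  proof (cases "?r \<in> S1")
    case False
    then have h0: "h = 0" using inv rZ1 unfolding minv_def by auto
    have rC: "?r \<in> ?M \<union> (Z1 t - S1) \<union> (Z0 t - {})" using False rZ1 by auto
    have "avgE t S1 h = E k (st t S1 {}) (drop t xs)" using h0 avgE0 by simp
    also have "\<dots> = E k (?M \<union> (Z1 t - S1) \<union> (Z0 t - {}), insert ?r ?M, ?P') ?xs'"
      unfolding ES[OF t] using rC by (rule E_step_hit)
    also have "\<dots> = avgE (Suc t) S1 0"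
    proof -
      have "st (Suc t) S1 {} = (?M \<union> (Z1 t - S1) \<union> (Z0 t - {}), insert ?r ?M, ?P')"
        unfolding st_def d2 using rC False by auto
      then show ?thesis unfolding avgE0 by simp
    qed
    also have "\<dots> \<le> Phi (Suc t)"
      by (rule IH) (use c False j h0 cM in \<open>auto simp: minv_def d2\<close>)
    finally show ?thesis using Phi by simp
  next
    case True
    show ?thesis
    proof (cases "Z1 t - S1 \<noteq> {}")
      case True2: True
      then have h0: "h = 0" using inv unfolding minv_def by auto
      have S0: "{} \<in> fam (Z0 t) 0" unfolding fam_def by simp
      have rC: "?r \<notin> ?M \<union> (Z1 t - S1) \<union> (Z0 t - {})" using rM rZ0 True by auto
      have "avgE t S1 h = E k (st t S1 {}) (drop t xs)" using h0 avgE0 by simp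
      also have "\<dots> = 1 + (\<Sum>q\<in>Z1 t - S1. E k (insert ?r ((?M \<union> (Z1 t - S1) \<union> (Z0 t - {})) - {q}), insert ?r ?M, ?P') ?xs') / card (Z1 t - S1)"
        using E_evict[OF t j inv[unfolded h0] S0 rM nb rC] True2 by simp
      also have "\<dots> \<le> 1 + Phi (Suc t)"
      proof -
        have "(\<Sum>q\<in>Z1 t - S1. E k (insert ?r ((?M \<union> (Z1 t - S1) \<union> (Z0 t - {})) - {q}), insert ?r ?M, ?P') ?xs') / card (Z1 t - S1) \<le> Phi (Suc t)"
        proof (rule avg_le)
          show "finite (Z1 t - S1)" using finZ by simp
          show "0 \<le> Phi (Suc t)" by (rule Phi_nonneg)
          fix x assume x: "x \<in> Z1 t - S1"
          have cx: "card (insert x (S1 - {?r})) = card S1"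
          proof -
            have "card (insert x (S1 - {?r})) = Suc (card (S1 - {?r}))" using x fS1 by simp
            also have "\<dots> = card S1" by (rule card_Suc_Diff1[OF fS1 True])
            finally show ?thesis .
          qed
          have "minv (Suc t) (insert x (S1 - {?r})) 0"
            unfolding minv_def d2 using x c j cM cx True h0 by auto
          then have "avgE (Suc t) (insert x (S1 - {?r})) 0 \<le> Phi (Suc t)" by (rule IH)
          moreover have "st (Suc t) (insert x (S1 - {?r})) {} = (insert ?r ((?M \<union> (Z1 t - S1) \<union> (Z0 t - {})) - {x}), insert ?r ?M, ?P')"
            unfolding st_def d2 using x Z_disj[of t] True by auto
          ultimately show "E k (insert ?r ((?M \<union> (Z1 t - S1) \<union> (Z0 t - {})) - {x}), insert ?r ?M, ?P') ?xs' \<le> Phi (Suc t)"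
            unfolding avgE0 by simp
        qed
        then show ?thesis by simp
      qed
      finally show ?thesis using Phi by simp
    next
      case False
      then have Z1S: "Z1 t - S1 = {}" by simp
      show ?thesis
      proof (cases "fam (Z0 t) h = {}")
        case True
        then show ?thesis unfolding avgE_def using Phi_nonneg by simp
      next
        case False
        then obtain S0 where S0: "S0 \<in> fam (Z0 t) h" by auto
        have "Z0 t - S0 \<noteq> {}" using cache_facts(4)[OF t j inv S0 rM nb] Z1S by simp
        then have hu: "h < card (Z0 t)" using fam_sub[OF S0] finZ(2)
          by (metis Diff_eq_empty_iff card_seteq le_neq_implies_less card_mono)
        have "avgE t S1 h = 1 + avgE (Suc t) (S1 - {?r}) (Suc h)"
          unfolding avgE_def d2
        proof (rule avg_evict0[OF finZ(2) hu])
          fix S assume S: "S \<in> fam (Z0 t) h"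
          have rC: "?r \<notin> ?M \<union> (Z1 t - S1) \<union> (Z0 t - S)" using rM rZ0 True by auto
          have fS: "finite S" using fam_sub[OF S] finZ(2) finite_subset by blast
          have cZ: "card (Z0 t - S) = card (Z0 t) - h" using fam_sub[OF S] fS
            by (simp add: card_Diff_subset)
          have "E k (st t S1 S) (drop t xs) = 1 + (\<Sum>q\<in>Z0 t - S. E k (insert ?r ((?M \<union> (Z0 t - S)) - {q}), insert ?r ?M, ?P') ?xs') / card (Z0 t - S)"
            using E_evict[OF t j inv S rM nb rC] Z1S by simp
          also have "(\<Sum>q\<in>Z0 t - S. E k (insert ?r ((?M \<union> (Z0 t - S)) - {q}), insert ?r ?M, ?P') ?xs')
             = (\<Sum>q\<in>Z0 t - S. E k (st (Suc t) (S1 - {?r}) (insert q S)) ?xs')"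
          proof (rule sum.cong[OF refl])
            fix q assume q: "q \<in> Z0 t - S"
            have "st (Suc t) (S1 - {?r}) (insert q S) = (insert ?r ((?M \<union> (Z0 t - S)) - {q}), insert ?r ?M, ?P')"
              unfolding st_def d2 using q Z_disj[of t] Z1S by auto
            then show "E k (insert ?r ((?M \<union> (Z0 t - S)) - {q}), insert ?r ?M, ?P') ?xs' = E k (st (Suc t) (S1 - {?r}) (insert q S)) ?xs'" by simp
          qed
          finally show "E k (st t S1 S) (drop t xs) = 1 + (\<Sum>x\<in>Z0 t - S. E k (st (Suc t) (S1 - {?r}) (insert x S)) ?xs') / real (card (Z0 t) - h)"
            using cZ by simp
        qed
        also have "avgE (Suc t) (S1 - {?r}) (Suc h) \<le> Phi (Suc t)"
        proof (rule IH)
          have e: "S1 = Z1 t" using c Z1S by auto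
          have "card (S1 - {?r}) + Suc h = card S1 + h" using True fS1
            by (simp add: card_Diff_singleton) (metis Suc_pred card_gt_0_iff empty_iff)
          then show "minv (Suc t) (S1 - {?r}) (Suc h)" unfolding minv_def d2 using j c cM e by simp
        qed
        finally show ?thesis using Phi by simp
      qed
    qed
  qed
qed

lemma case_O0:
  assumes t: "t < nI" and tI: "t \<le> nI" and rZ0: "I!t \<in> Z0 t" and nb: "\<not> bnd t" and inv: "minv t S1 h"
    and IH: "\<And>S1 h. minv (Suc t) S1 h \<Longrightarrow> avgE (Suc t) S1 h \<le> Phi (Suc t)"
  shows "avgE t S1 h \<le> Phi t"
proof -
  note d = nb_data[OF nb]
  let ?r = "I!t" and ?M = "Mt t" and ?P' = "(Pt t)(I!t := p!t)" and ?xs' = "drop (Suc t) xs"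
  have rM: "?r \<notin> ?M" and rO: "?r \<in> Ot t" and rZ1: "?r \<notin> Z1 t" using rZ0 Z_disj[of t] by (auto simp: Z0_def Z_def)
  have j: "0 < jt t" using rZ0 Z_disj[of t] jt_pos_Z by auto
  have d2: "Mt (Suc t) = insert ?r ?M" "Z0 (Suc t) = Z0 t - {?r}" "Z1 (Suc t) = Z1 t" "Pt (Suc t) = ?P'" "jt (Suc t) = jt t"
    "Ot (Suc t) = Ot t"
    using d rZ1 by (auto simp: dsS)
  have Phi: "Phi t = Phi (Suc t) + real (aa t) / real (u0 t)" using Phi_nb[OF t nb] rM rO rZ1 rZ0 by simp
  have cM: "card (insert ?r ?M - Ot t) = card (?M - Ot t)"
  proof -
    have "insert ?r ?M - Ot t = ?M - Ot t" using rO by auto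
    then show ?thesis by simp
  qed
  have c: "card S1 + h = card (?M - Ot t)" "S1 \<subseteq> Z1 t" using inv j unfolding minv_def by auto
  have aau: "aa t < u0 t"
  proof -
    have "{q \<in> Z0 t. \<not> later t q} \<subset> Z0 t" using rZ0 nb_later_self[OF t nb] by auto
    then show ?thesis unfolding aa_def u0_def using finZ(2) by (rule psubset_card_mono[rotated])
  qed
  have haa: "h \<le> aa t" using h_le_aa[OF tI inv] by (cases "h = 0") auto
  have hu: "h < card (Z0 t)" using aau haa unfolding u0_def by simp
  define g where "g S = E k (st (Suc t) S1 S) ?xs'" for S
  have "avgE t S1 h = real h / real (card (Z0 t)) + (\<Sum>S\<in>fam (Z0 t - {?r}) h. g S) / real (card (fam (Z0 t - {?r}) h))"
    unfolding avgE_def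
  proof (subst sum.cong[OF refl])
    fix S assume S: "S \<in> fam (Z0 t) h"
    have fS: "finite S" using fam_sub[OF S] finZ(2) finite_subset by blast
    have cZ: "card (Z0 t - S) = card (Z0 t) - h" using fam_sub[OF S] fS by (simp add: card_Diff_subset)
    show "E k (st t S1 S) (drop t xs) = (if ?r \<in> S then 1 + (\<Sum>x\<in>Z0 t - S. g (insert x (S - {?r}))) / real (card (Z0 t) - h) else g S)"
    proof (cases "?r \<in> S")
      case False
      have rC: "?r \<in> ?M \<union> (Z1 t - S1) \<union> (Z0 t - S)" using False rZ0 by auto
      have "E k (st t S1 S) (drop t xs) = E k (?M \<union> (Z1 t - S1) \<union> (Z0 t - S), insert ?r ?M, ?P') ?xs'"
        unfolding ES[OF t] using rC by (rule E_step_hit)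
      also have "\<dots> = g S"
      proof -
        have "st (Suc t) S1 S = (?M \<union> (Z1 t - S1) \<union> (Z0 t - S), insert ?r ?M, ?P')"
          unfolding st_def d2 using rC False by auto
        then show ?thesis unfolding g_def by simp
      qed
      finally show ?thesis using False by simp
    next
      case True
      then have hpos: "0 < h" using fam_sub[OF S] fS card_gt_0_iff by blast
      then have Z1S: "Z1 t - S1 = {}" using inv unfolding minv_def by auto
      have rC: "?r \<notin> ?M \<union> (Z1 t - S1) \<union> (Z0 t - S)" using rM rZ1 True by auto
      have "E k (st t S1 S) (drop t xs) = 1 + (\<Sum>q\<in>Z0 t - S. E k (insert ?r ((?M \<union> (Z0 t - S)) - {q}), insert ?r ?M, ?P') ?xs') / card (Z0 t - S)"
        using E_evict[OF t j inv S rM nb rC] Z1S by simp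
      also have "(\<Sum>q\<in>Z0 t - S. E k (insert ?r ((?M \<union> (Z0 t - S)) - {q}), insert ?r ?M, ?P') ?xs')
             = (\<Sum>q\<in>Z0 t - S. g (insert q (S - {?r})))"
      proof (rule sum.cong[OF refl])
        fix q assume q: "q \<in> Z0 t - S"
        have "st (Suc t) S1 (insert q (S - {?r})) = (insert ?r ((?M \<union> (Z0 t - S)) - {q}), insert ?r ?M, ?P')"
          unfolding st_def d2 using q Z_disj[of t] Z1S True by auto
        then show "E k (insert ?r ((?M \<union> (Z0 t - S)) - {q}), insert ?r ?M, ?P') ?xs' = g (insert q (S - {?r}))"
          unfolding g_def by simp
      qed
      finally show ?thesis using True cZ by simp
    qed
  next
    show "(\<Sum>S\<in>fam (Z0 t) h. if ?r \<in> S then 1 + (\<Sum>x\<in>Z0 t - S. g (insert x (S - {?r}))) / real (card (Z0 t) - h) else g S) / real (card (fam (Z0 t) h))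
      = real h / real (card (Z0 t)) + (\<Sum>S\<in>fam (Z0 t - {?r}) h. g S) / real (card (fam (Z0 t - {?r}) h))"
      by (rule avg_rem[OF finZ(2) rZ0 hu])
  qed
  also have "(\<Sum>S\<in>fam (Z0 t - {?r}) h. g S) / real (card (fam (Z0 t - {?r}) h)) = avgE (Suc t) S1 h"
    unfolding avgE_def d2 g_def ..
  also have "avgE (Suc t) S1 h \<le> Phi (Suc t)"
    by (rule IH) (use inv j cM in \<open>simp add: minv_def d2\<close>)
  finally have "avgE t S1 h \<le> real h / real (u0 t) + Phi (Suc t)" unfolding u0_def by simp
  moreover have "real h / real (u0 t) \<le> real (aa t) / real (u0 t)"
    using haa by (simp add: divide_right_mono)
  ultimately show ?thesis using Phi by simp
qed

lemma E_Nil: "E k s [] = 0" unfolding E_def by simp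

lemma main: "t \<le> nI \<Longrightarrow> minv t S1 h \<Longrightarrow> avgE t S1 h \<le> Phi t"
proof (induction "nI - t" arbitrary: t S1 h)
  case 0
  then have "t = nI" by simp
  then have "drop t xs = []" unfolding xs_def using len by simp
  then show ?case unfolding avgE_def using Phi_nonneg by (simp add: E_Nil)
next
  case (Suc m)
  then have t: "t < nI" by simp
  have IH: "\<And>S1 h. minv (Suc t) S1 h \<Longrightarrow> avgE (Suc t) S1 h \<le> Phi (Suc t)"
    using Suc by simp
  show ?case
  proof (cases "bnd t")
    case True show ?thesis by (rule case_B[OF t True Suc.prems(2)]) (rule IH)
  next
    case nb: False
    show ?thesis
    proof (cases "I!t \<in> Mt t")
      case True show ?thesis by (rule case_H[OF t True Suc.prems(2)]) (rule IH)
    next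
      case rM: False
      show ?thesis
      proof (cases "I!t \<in> Ot t")
        case False show ?thesis by (rule case_N[OF t rM False nb Suc.prems(2)]) (rule IH)
      next
        case rO: True
        show ?thesis
        proof (cases "Pt t (I!t)")
          case True
          then have "I!t \<in> Z1 t" using rO rM by (simp add: Zmem)
          then show ?thesis by (rule case_O1[OF t _ nb Suc.prems(2)]) (rule IH)
        next
          case False
          then have "I!t \<in> Z0 t" using rO rM by (simp add: Zmem)
          then show ?thesis by (rule case_O0[OF t Suc.prems(1) _ nb Suc.prems(2)]) (rule IH)
        qed
      qed
    qed
  qed
qed

lemma cost_bound:
  "mp_cost k I p \<le> real (NF 0) + real (eta k I p True) + Hn k * real (eta k I p False)"
proof -
  have Z: "Z 0 = {}" "Z0 0 = {}" "Z1 0 = {}" using Z_j0 ds0 by auto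
  have "minv 0 {} 0" unfolding minv_def using Z ds0 by simp
  then have "avgE 0 {} 0 \<le> Phi 0" by (intro main) auto
  moreover have "avgE 0 {} 0 = mp_cost k I p"
    unfolding avgE0 st_def mp_cost_def E_def xs_def using Z ds0 by simp
  moreover have "E1F 0 = eta k I p True" "A0F 0 = eta k I p False"
    unfolding E1F_def A0F_def eta_def ds0 by simp_all
  moreover have "ea 0 = 0" "aa 0 = 0" unfolding ea_def aa_def using Z by simp_all
  ultimately show ?thesis unfolding Phi_def by simp
qed

end


context mpl
begin

lemma not_bnd0: "\<not> bnd 0" using k1 unfolding bnd_def by (simp add: ds0)

lemma ph0: "0 < nI \<Longrightarrow> ph 0 = 0"
  using ph_jt[of 0] not_bnd0 by (simp add: dsS ds0)

lemma ph_step: "Suc i < nI \<Longrightarrow> ph (Suc i) \<le> Suc (ph i)"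
  using ph_jt[of "Suc i"] ph_jt[of i] jt_Suc(2)[of "Suc i"] by simp

lemma ph_ivt: "i0 < nI \<Longrightarrow> v \<le> ph i0 \<Longrightarrow> \<exists>i\<le>i0. ph i = v"
proof (induction i0)
  case 0 then show ?case using ph0 by auto
next
  case (Suc i)
  show ?case
  proof (cases "v \<le> ph i")
    case True then show ?thesis using Suc by (metis Suc_lessD le_SucI)
  next
    case False
    then have "v = ph (Suc i)" using Suc ph_step[of i] by simp
    then show ?thesis by auto
  qed
qed

definition "Nj j = {i. i < nI \<and> newr i \<and> ph i = j}"

lemma newr_inj: "inj_on (\<lambda>i. I!i) (Nj j)"
proof (rule inj_onI)
  fix a c assume a: "a \<in> Nj j" and c: "c \<in> Nj j" and e: "I!a = I!c"
  show "a = c"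
  proof (rule ccontr)
    assume "a \<noteq> c"
    then consider "a < c" | "c < a" by linarith
    then show False
    proof cases
      case 1
      have c0: "0 < c" using 1 by simp
      have "ph a \<le> ph (c - 1)" "ph (c - 1) \<le> ph c" using 1 c ph_mono unfolding Nj_def by auto
      then have "ph (c - 1) = j" using a c unfolding Nj_def by simp
      moreover have "c < nI" using c unfolding Nj_def by simp
      then have "c - 1 < nI" using le_less_trans[OF diff_le_self] by blast
      ultimately have "jt c = j" using ph_jt[of "c - 1"] c0 by simp
      then have "I!a \<in> Mt c" using M_char[of c] 1 a c unfolding Nj_def by auto
      then show False using c e unfolding Nj_def newr_def by simp
    next
      case 2
      have c0: "0 < a" using 2 by simp
      have "ph c \<le> ph (a - 1)" "ph (a - 1) \<le> ph a" using 2 a ph_mono unfolding Nj_def by auto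
      then have "ph (a - 1) = j" using a c unfolding Nj_def by simp
      moreover have "a < nI" using a unfolding Nj_def by simp
      then have "a - 1 < nI" using le_less_trans[OF diff_le_self] by blast
      ultimately have "jt a = j" using ph_jt[of "a - 1"] c0 by simp
      then have "I!c \<in> Mt a" using M_char[of a] 2 a c unfolding Nj_def by auto
      then show False using a e unfolding Nj_def newr_def by simp
    qed
  qed
qed

lemma N0_card: "card (Nj 0) \<le> k"
proof -
  have "card (Nj 0) = card ((\<lambda>i. I!i) ` Nj 0)" using card_image[OF newr_inj] by simp
  also have "\<dots> \<le> card (Mt 0 \<union> {q. later 0 q})"
  proof (rule card_mono)
    have "{q. later 0 q} \<subseteq> set I" unfolding later_def by auto
    then show "finite (Mt 0 \<union> {q. later 0 q})" using finM by (auto intro: finite_subset)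
    show "(\<lambda>i. I!i) ` Nj 0 \<subseteq> Mt 0 \<union> {q. later 0 q}" unfolding Nj_def later_def ds0 by auto
  qed
  also have "\<dots> \<le> k" using later_card[of 0] by simp
  finally show ?thesis .
qed

lemma phase_start:
  assumes i0: "i0 < nI" "ph i0 = j" and j: "1 \<le> j"
  obtains b f where "b \<le> i0" "bnd b" "jt b = j - 1" "Mt b = {I!i | i. i < b \<and> ph i = j - 1}"
    "card (Mt b) = k" "f < b" "ph f = j - 1" "\<And>i. i < nI \<Longrightarrow> ph i = j - 1 \<Longrightarrow> f \<le> i"
    "\<And>i. i < nI \<Longrightarrow> ph i = j \<Longrightarrow> b \<le> i"
proof -
  define b where "b = (LEAST i. i < nI \<and> ph i = j)"
  have bP: "b < nI \<and> ph b = j" unfolding b_def using LeastI[of "\<lambda>i. i < nI \<and> ph i = j" i0] i0 by blast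
  have bl: "\<And>i. i < nI \<Longrightarrow> ph i = j \<Longrightarrow> b \<le> i" unfolding b_def by (simp add: Least_le)
  have b0: "0 < b" using bP ph0 j by (cases b) auto
  have pb1: "ph (b - 1) = j - 1"
  proof -
    have "ph (b - 1) \<le> j" using ph_mono[of "b - 1" b] bP by simp
    moreover have "ph (b - 1) \<noteq> j" using bl[of "b - 1"] bP b0 by fastforce
    moreover have "j \<le> Suc (ph (b - 1))" using ph_step[of "b - 1"] bP b0 by simp
    ultimately show ?thesis by simp
  qed
  have "b - 1 < nI" using le_less_trans[OF diff_le_self bP[THEN conjunct1]] .
  then have jb: "jt b = j - 1" using ph_jt[of "b - 1"] pb1 b0 by simp
  have bb: "bnd b"
  proof (rule ccontr)
    assume "\<not> bnd b"
    then have "jt (Suc b) = jt b" by (simp add: dsS)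
    then show False using ph_jt[of b] bP jb j by simp
  qed
  define f where "f = (LEAST i. i < nI \<and> ph i = j - 1)"
  have fP: "f < nI \<and> ph f = j - 1" unfolding f_def using LeastI[of "\<lambda>i. i < nI \<and> ph i = j - 1" "b - 1"] pb1 \<open>b - 1 < nI\<close> by simp
  have fl: "\<And>i. i < nI \<Longrightarrow> ph i = j - 1 \<Longrightarrow> f \<le> i" unfolding f_def by (simp add: Least_le)
  have fb: "f < b" using fl[of "b - 1"] pb1 \<open>b - 1 < nI\<close> b0 by simp
  show ?thesis
  proof (rule that)
    show "b \<le> i0" using bl i0 by simp
    show "bnd b" by (rule bb)
    show "jt b = j - 1" by (rule jb)
    show "Mt b = {I!i | i. i < b \<and> ph i = j - 1}" using M_char[of b] bP jb by simp
    show "card (Mt b) = k" using b_data(8)[OF bb] .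
    show "f < b" by (rule fb)
    show "ph f = j - 1" using fP by simp
  qed (use fl bl in auto)
qed

end


context mpl
begin

lemma vs_step: "valid_schedule k I Cs \<Longrightarrow> i < nI \<Longrightarrow> paging_step k (Cs!i) (I!i) (Cs!Suc i)"
  unfolding valid_schedule_def by simp

lemma sched_fin: "valid_schedule k I Cs \<Longrightarrow> i \<le> nI \<Longrightarrow> finite (Cs!i) \<and> card (Cs!i) \<le> k"
proof (induction i)
  case 0 then show ?case unfolding valid_schedule_def by simp
next
  case (Suc i)
  then have IH: "finite (Cs!i)" "card (Cs!i) \<le> k" and st: "paging_step k (Cs!i) (I!i) (Cs!Suc i)"
    using vs_step by auto
  show ?case
  proof (cases "I!i \<in> Cs!i")
    case True then show ?thesis using st IH unfolding paging_step_def by simp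
  next
    case nin: False
    show ?thesis
    proof (cases "card (Cs!i) < k")
      case True then show ?thesis using st IH nin unfolding paging_step_def by (simp add: card_insert_if)
    next
      case False
      then obtain q where q: "q \<in> Cs!i" "Cs!Suc i = insert (I!i) (Cs!i - {q})" using st nin unfolding paging_step_def by auto
      have "card (Cs!i - {q}) < card (Cs!i)" by (rule card_Diff1_less[OF IH(1) q(1)])
      then show ?thesis using q IH by (simp add: card_insert_if)
    qed
  qed
qed

lemma sched_sub: "valid_schedule k I Cs \<Longrightarrow> i < nI \<Longrightarrow> Cs!(Suc i) \<subseteq> insert (I!i) (Cs!i)"
  using vs_step[of Cs i] unfolding paging_step_def by (auto split: if_splits)

lemma sched_req: "valid_schedule k I Cs \<Longrightarrow> i < nI \<Longrightarrow> I!i \<in> Cs!(Suc i)"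
  using vs_step[of Cs i] unfolding paging_step_def by (auto split: if_splits)

lemma sched_absent:
  assumes v: "valid_schedule k I Cs" and q: "q \<notin> Cs!a"
  shows "a \<le> b \<Longrightarrow> b \<le> nI \<Longrightarrow> \<forall>i. a \<le> i \<and> i < b \<longrightarrow> I!i \<noteq> q \<Longrightarrow> q \<notin> Cs!b"
proof (induction b)
  case 0 then show ?case using q by simp
next
  case (Suc m)
  show ?case
  proof (cases "a = Suc m")
    case True then show ?thesis using q by simp
  next
    case False
    then have "a \<le> m" using Suc by simp
    then have "q \<notin> Cs!m" "I!m \<noteq> q" using Suc by auto
    then show ?thesis using sched_sub[OF v, of m] Suc by auto
  qed
qed

lemma phase_faults:
  assumes v: "valid_schedule k I Cs" and j: "1 \<le> j"
  shows "card (Nj j) \<le> card {i. i < nI \<and> I!i \<notin> Cs!i \<and> (ph i = j - 1 \<or> ph i = j)}"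
proof (cases "Nj j = {}")
  case True then show ?thesis by simp
next
  case False
  then obtain i0 where i0: "i0 \<in> Nj j" by auto
  then have i0': "i0 < nI" "ph i0 = j" unfolding Nj_def by auto
  obtain b f where bf: "b \<le> i0" "bnd b" "jt b = j - 1" "Mt b = {I!i | i. i < b \<and> ph i = j - 1}"
    "card (Mt b) = k" "f < b" "ph f = j - 1" "\<And>i. i < nI \<Longrightarrow> ph i = j - 1 \<Longrightarrow> f \<le> i"
    "\<And>i. i < nI \<Longrightarrow> ph i = j \<Longrightarrow> b \<le> i"
    using phase_start[OF i0' j] by blast
  let ?W = "Mt b"
  let ?N = "(\<lambda>i. I!i) ` Nj j"
  let ?T = "(?W - {I!f}) \<union> ?N"
  have fnI: "f < nI" using bf(1) bf(6) i0'(1) by linarith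
  have fW: "I!f \<in> ?W" using bf by auto
  have NW: "?N \<inter> ?W = {}"
  proof -
    have "I!i \<notin> ?W" if i: "i \<in> Nj j" for i
    proof -
      have i': "i < nI" "newr i" "ph i = j" using i unfolding Nj_def by auto
      have bi: "b \<le> i" using bf(9) i' by simp
      have jS: "jt (Suc i) = j" using ph_jt[of i] i' by simp
      have OC: "Ot (Suc i) = {I!i' | i'. i' < Suc i \<and> Suc (ph i') = jt (Suc i)}" using O_char[of "Suc i"] i' by simp
      have "?W \<subseteq> Ot (Suc i)"
      proof
        fix x assume "x \<in> ?W"
        then obtain i' where "x = I!i'" "i' < b" "ph i' = j - 1" using bf(4) by auto
        then show "x \<in> Ot (Suc i)" unfolding OC using bi jS j by auto
      qed
      then show ?thesis using i' unfolding newr_def by auto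
    qed
    then show ?thesis by auto
  qed
  have finW: "finite ?W" by (rule finM)
  have finN: "finite (Nj j)" unfolding Nj_def by simp
  have cT: "card ?T = (k - 1) + card (Nj j)"
  proof -
    have "card ?T = card (?W - {I!f}) + card ?N"
      using NW finW finN by (intro card_Un_disjoint) auto
    moreover have "card (?W - {I!f}) = k - 1" using fW bf(5) finW by simp
    moreover have "card ?N = card (Nj j)" using card_image[OF newr_inj] .
    ultimately show ?thesis by simp
  qed
  let ?C = "Cs!(Suc f)"
  have Cfin: "finite ?C" "card ?C \<le> k" using sched_fin[OF v, of "Suc f"] fnI by auto
  have fC: "I!f \<in> ?C" using sched_req[OF v fnI] .
  have fT: "I!f \<notin> ?T" using NW fW by auto
  have "card (Nj j) \<le> card (?T - ?C)"
  proof -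
    have "card ?T - card (?C - {I!f}) \<le> card (?T - (?C - {I!f}))"
      using Cfin by (intro diff_card_le_card_Diff) auto
    moreover have "?T - (?C - {I!f}) = ?T - ?C" using fT by auto
    moreover have "card (?C - {I!f}) \<le> k - 1" using fC Cfin by simp
    ultimately show ?thesis using cT by simp
  qed
  also have "card (?T - ?C) \<le> card {i. i < nI \<and> I!i \<notin> Cs!i \<and> (ph i = j - 1 \<or> ph i = j)}"
  proof -
    define g where "g q = (LEAST i. Suc f \<le> i \<and> i < nI \<and> I!i = q)" for q
    have wit: "\<exists>w. Suc f \<le> w \<and> w < nI \<and> I!w = q \<and> ph w \<le> j" if q: "q \<in> ?T" for q
    proof (cases "q \<in> ?N")
      case True
      then obtain i where i: "i \<in> Nj j" "q = I!i" by auto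
      then have "i < nI" "ph i = j" "b \<le> i" using bf(9) unfolding Nj_def by auto
      then show ?thesis using i bf(6) by (intro exI[of _ i]) auto
    next
      case False
      then have "q \<in> ?W - {I!f}" using q by auto
      then obtain i where i: "i < b" "ph i = j - 1" "q = I!i" "q \<noteq> I!f" using bf(4) by auto
      have inI: "i < nI" using i bf(1) i0' by simp
      then have "f \<le> i" using bf(8) i by simp
      moreover have "i \<noteq> f" using i by auto
      ultimately show ?thesis using i inI by (intro exI[of _ i]) auto
    qed
    have gP: "Suc f \<le> g q \<and> g q < nI \<and> I!(g q) = q \<and> ph (g q) \<le> j \<and> (\<forall>i. Suc f \<le> i \<and> i < g q \<longrightarrow> I!i \<noteq> q)"
      if q: "q \<in> ?T" for q
    proof -
      obtain w where w: "Suc f \<le> w" "w < nI" "I!w = q" "ph w \<le> j" using wit[OF q] by blast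
      have L: "Suc f \<le> g q \<and> g q < nI \<and> I!(g q) = q" unfolding g_def
        using LeastI[of "\<lambda>i. Suc f \<le> i \<and> i < nI \<and> I!i = q" w] w by blast
      have le: "g q \<le> w" unfolding g_def using w by (intro Least_le) auto
      have "ph (g q) \<le> ph w" using ph_mono[OF le w(2)] .
      moreover have "\<forall>i. Suc f \<le> i \<and> i < g q \<longrightarrow> I!i \<noteq> q"
        unfolding g_def using not_less_Least L le w by (metis (mono_tags, lifting) g_def less_trans)
      ultimately show ?thesis using L w by simp
    qed
    show ?thesis
    proof (rule card_inj_on_le[where f=g])
      show "inj_on g (?T - ?C)"
        by (rule inj_on_inverseI[where g="\<lambda>i. I!i"]) (use gP in auto)
      show "finite {i. i < nI \<and> I!i \<notin> Cs!i \<and> (ph i = j - 1 \<or> ph i = j)}" by simp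
      show "g ` (?T - ?C) \<subseteq> {i. i < nI \<and> I!i \<notin> Cs!i \<and> (ph i = j - 1 \<or> ph i = j)}"
      proof
        fix x assume "x \<in> g ` (?T - ?C)"
        then obtain q where q: "q \<in> ?T" "q \<notin> ?C" "x = g q" by auto
        note G = gP[OF q(1)]
        have "q \<notin> Cs!(g q)"
          using sched_absent[OF v, of q "Suc f" "g q"] G q by simp
        moreover have "j - 1 \<le> ph (g q)" using ph_mono[of f "g q"] G bf(7) by simp
        ultimately show "x \<in> {i. i < nI \<and> I!i \<notin> Cs!i \<and> (ph i = j - 1 \<or> ph i = j)}"
          using G q by auto
      qed
    qed
  qed
  finally show ?thesis .
qed

end


context mpl
begin

lemma NF_split: "NF 0 = card (Nj 0) + (\<Sum>j\<in>{1..ph (nI - 1)}. card (Nj j))"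
proof -
  let ?J = "ph (nI - 1)"
  have U: "{i. 0 \<le> i \<and> i < nI \<and> newr i} = (\<Union>j\<in>{0..?J}. Nj j)"
  proof
    show "{i. 0 \<le> i \<and> i < nI \<and> newr i} \<subseteq> (\<Union>j\<in>{0..?J}. Nj j)"
    proof
      fix i assume "i \<in> {i. 0 \<le> i \<and> i < nI \<and> newr i}"
      then have i: "i < nI" "newr i" by auto
      then have "ph i \<le> ?J" using ph_mono[of i "nI - 1"] by simp
      then show "i \<in> (\<Union>j\<in>{0..?J}. Nj j)" using i unfolding Nj_def by auto
    qed
    show "(\<Union>j\<in>{0..?J}. Nj j) \<subseteq> {i. 0 \<le> i \<and> i < nI \<and> newr i}" unfolding Nj_def by auto
  qed
  have "NF 0 = card (\<Union>j\<in>{0..?J}. Nj j)" unfolding NF_def U ..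
  also have "\<dots> = (\<Sum>j\<in>{0..?J}. card (Nj j))"
    by (rule card_UN_disjoint) (auto simp: Nj_def)
  also have "\<dots> = card (Nj 0) + (\<Sum>j\<in>{1..?J}. card (Nj j))"
    by (simp add: sum.atLeast_Suc_atMost)
  finally show ?thesis .
qed

lemma card_filter_sum: "finite F \<Longrightarrow> card {i \<in> F. P i} = (\<Sum>i\<in>F. if P i then 1 else (0::nat))"
  using sum.inter_filter[of F "\<lambda>_. 1::nat" P] by simp

lemma double_count:
  assumes F: "finite F"
  shows "(\<Sum>j\<in>{1..J}. card {i \<in> F. ph i = j - 1 \<or> ph i = j}) \<le> 2 * card F"
proof -
  have "(\<Sum>j\<in>{1..J}. card {i \<in> F. ph i = j - 1 \<or> ph i = j})
      = (\<Sum>j\<in>{1..J}. \<Sum>i\<in>F. if ph i = j - 1 \<or> ph i = j then 1 else 0)"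
    using card_filter_sum[OF F] by simp
  also have "\<dots> = (\<Sum>i\<in>F. \<Sum>j\<in>{1..J}. if ph i = j - 1 \<or> ph i = j then 1 else 0)"
    by (rule sum.swap)
  also have "\<dots> = (\<Sum>i\<in>F. card {j\<in>{1..J}. ph i = j - 1 \<or> ph i = j})"
    using card_filter_sum[of "{1..J}"] by simp
  also have "\<dots> \<le> (\<Sum>i\<in>F. 2)"
  proof (rule sum_mono)
    fix i
    have "{j\<in>{1..J}. ph i = j - 1 \<or> ph i = j} \<subseteq> {ph i, Suc (ph i)}" by auto
    then have "card {j\<in>{1..J}. ph i = j - 1 \<or> ph i = j} \<le> card {ph i, Suc (ph i)}"
      by (intro card_mono) auto
    also have "\<dots> \<le> 2" by (simp add: card_insert_if)
    finally show "card {j\<in>{1..J}. ph i = j - 1 \<or> ph i = j} \<le> 2" .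
  qed
  finally show ?thesis by simp
qed

lemma NF_OPT_sched: "valid_schedule k I Cs \<Longrightarrow> NF 0 \<le> k + 2 * schedule_cost I Cs"
proof -
  assume v: "valid_schedule k I Cs"
  let ?F = "{i. i < nI \<and> I!i \<notin> Cs!i}"
  let ?J = "ph (nI - 1)"
  have "(\<Sum>j\<in>{1..?J}. card (Nj j)) \<le> (\<Sum>j\<in>{1..?J}. card {i \<in> ?F. ph i = j - 1 \<or> ph i = j})"
  proof (rule sum_mono)
    fix j assume "j \<in> {1..?J}"
    then have "1 \<le> j" by simp
    then have "card (Nj j) \<le> card {i. i < nI \<and> I!i \<notin> Cs!i \<and> (ph i = j - 1 \<or> ph i = j)}"
      by (rule phase_faults[OF v])
    moreover have "{i. i < nI \<and> I!i \<notin> Cs!i \<and> (ph i = j - 1 \<or> ph i = j)} = {i \<in> ?F. ph i = j - 1 \<or> ph i = j}"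
      by auto
    ultimately show "card (Nj j) \<le> card {i \<in> ?F. ph i = j - 1 \<or> ph i = j}" by simp
  qed
  also have "\<dots> \<le> 2 * card ?F" by (rule double_count) simp
  finally have "(\<Sum>j\<in>{1..?J}. card (Nj j)) \<le> 2 * schedule_cost I Cs" unfolding schedule_cost_def .
  then show ?thesis using NF_split N0_card by simp
qed

fun scf :: "nat \<Rightarrow> 'a set" where
  "scf 0 = {}"
| "scf (Suc i) = (if I!i \<in> scf i then scf i else if card (scf i) < k then insert (I!i) (scf i)
     else insert (I!i) (scf i - {SOME q. q \<in> scf i}))"

lemma scf_valid: "valid_schedule k I (map scf [0..<Suc nI])"
  unfolding valid_schedule_def
proof (intro conjI allI impI)
  show "length (map scf [0..<Suc nI]) = nI + 1" by simp
  show "map scf [0..<Suc nI] ! 0 = {}" by (simp del: upt_Suc)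
  fix i assume i: "i < nI"
  have e: "map scf [0..<Suc nI] ! i = scf i" "map scf [0..<Suc nI] ! Suc i = scf (Suc i)"
    using i by (simp_all del: upt_Suc)
  show "paging_step k (map scf [0..<Suc nI] ! i) (I ! i) (map scf [0..<Suc nI] ! Suc i)"
    unfolding e paging_step_def
  proof (cases "I!i \<in> scf i")
    case True then show "if I ! i \<in> scf i then scf (Suc i) = scf i else if card (scf i) < k then scf (Suc i) = insert (I ! i) (scf i)
          else \<exists>q\<in>scf i. scf (Suc i) = insert (I ! i) (scf i - {q})" by simp
  next
    case False
    show "if I ! i \<in> scf i then scf (Suc i) = scf i else if card (scf i) < k then scf (Suc i) = insert (I ! i) (scf i)
          else \<exists>q\<in>scf i. scf (Suc i) = insert (I ! i) (scf i - {q})"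
    proof (cases "card (scf i) < k")
      case True then show ?thesis using False by simp
    next
      case c: False
      then have "scf i \<noteq> {}" using k1 by auto
      then have "(SOME q. q \<in> scf i) \<in> scf i" by (simp add: some_in_eq)
      then show ?thesis using False c by auto
    qed
  qed
qed

lemma NF_OPT: "NF 0 \<le> k + 2 * OPT k I"
proof -
  have ex: "\<exists>c Cs. valid_schedule k I Cs \<and> schedule_cost I Cs = c" using scf_valid by blast
  have "\<exists>Cs. valid_schedule k I Cs \<and> schedule_cost I Cs = OPT k I"
    unfolding OPT_def by (rule LeastI_ex) (use ex in blast)
  then obtain Cs where "valid_schedule k I Cs" "schedule_cost I Cs = OPT k I" by blast
  then show ?thesis using NF_OPT_sched by metis
qed

lemma final: "mp_cost k I p \<le> 2 * real (OPT k I) + (\<Sum>j=1..k. 1 / real j) * real (eta k I p False)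
                            + real (eta k I p True) + real k"
proof -
  have "real (NF 0) \<le> real k + 2 * real (OPT k I)" using NF_OPT by (metis of_nat_add of_nat_le_iff of_nat_mult of_nat_numeral)
  then show ?thesis using cost_bound unfolding Hn_def by simp
qed

end

theorem theorem3:
  fixes k :: nat
  assumes "k \<ge> 1"
  shows "\<exists>b::real. \<forall>(I :: 'a list) (p :: bool list). length p = length I \<longrightarrow>
           mp_cost k I p \<le> 2 * real (OPT k I) + (\<Sum>j=1..k. 1 / real j) * real (eta k I p False)
                            + real (eta k I p True) + b"
proof (intro exI allI impI)
  fix I :: "'a list" and p :: "bool list"
  assume "length p = length I"
  then interpret mpl k I p using assms by unfold_locales
  show "mp_cost k I p \<le> 2 * real (OPT k I) + (\<Sum>j=1..k. 1 / real j) * real (eta k I p False)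
                            + real (eta k I p True) + real k" by (rule final)
qed


end
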